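(* Let $A\subseteq\mathcal{R}$ be S-measurable. Then $A$ is L-measurable and $M(A)=M_s(A)$.
   Context: $\mathcal{R}$ denotes the Levi-Civita field: functions $x:\mathbb{Q}\to\mathbb{R}$ with left-finite support, with componentwise addition and formal power series multiplication, ordered by $x>0$ iff $x\ne0$ and $x[\min\operatorname{supp}x]>0$; it is a non-Archimedean ordered field extension of $\mathbb{R}$, Cauchy complete in the order topology, in which all limits and series are taken (a series $\sum a_n$ converges iff $a_n\to0$). An interval is a set $[a,b],[a,b),(a,b]$ or $(a,b)$ with $a<b$ in $\mathcal{R}$, of length $l=b-a$. A cover of $A\subseteq\mathcal{R}$ is a sequence of intervals $(S_n)_{n\ge1}$ with $A\subseteq\bigcup_n S_n$ and $\sum_n l(S_n)$ convergent in $\mathcal{R}$. $A$ is called outer measurable if the infimum $\inf\{\sum_n l(S_n): (S_n)\text{ a cover of }A\}$ exists in $\mathcal{R}$; this infimum is then called the outer measure $M_u(A)$. An outer measurable set $A\subseteq\mathcal{R}$ is L-measurable if for every outer measurable $B\subseteq\mathcal{R}$ both $A\cap B$ and $A^c\cap B$ (where $A^c=\mathcal{R}\setminus A$) are outer measurable and $M_u(B)=M_u(A\cap B)+M_u(A^c\cap B)$; then its L-measure is $M(A):=M_u(A)$. A set $A\subseteq\mathcal{R}$ is S-measurable if for every $\epsilon>0$ in $\mathcal{R}$ there are sequences of pairwise disjoint intervals $(I_n)$, $(J_n)$ with $\bigcup_n I_n\subseteq A\subseteq\bigcup_n J_n$, $\sum_n l(I_n)$ and $\sum_n l(J_n)$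 convergent, and $\sum_n l(J_n)-\sum_n l(I_n)\le\epsilon$; its S-measure $M_s(A)$ is the supremum of $\sum_n l(I_n)$ over such inner families, which equals the infimum of $\sum_n l(J_n)$ over such outer families. *)

theory Defs
  imports Complex_Main
begin

typedef levi_civita = "{x :: rat \<Rightarrow> real. \<forall>q. finite {p. p \<le> q \<and> x p \<noteq> 0}}"
  morphisms lc_rep Abs_lc
  by (rule exI[of _ "\<lambda>_. 0"]) simp

instantiation levi_civita :: "{zero, plus, minus, uminus, times, ord}"
begin

definition zero_levi_civita :: levi_civita where
  "zero_levi_civita = Abs_lc (\<lambda>_. 0)"

definition plus_levi_civita :: "levi_civita \<Rightarrow> levi_civita \<Rightarrow> levi_civita" where
  "plus_levi_civita x y = Abs_lc (\<lambda>q. lc_rep x q + lc_rep y q)"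

definition uminus_levi_civita :: "levi_civita \<Rightarrow> levi_civita" where
  "uminus_levi_civita x = Abs_lc (\<lambda>q. - lc_rep x q)"

definition minus_levi_civita :: "levi_civita \<Rightarrow> levi_civita \<Rightarrow> levi_civita" where
  "minus_levi_civita x y = Abs_lc (\<lambda>q. lc_rep x q - lc_rep y q)"

text \<open>Formal power series (Cauchy) product; the index set is finite by left-finiteness.\<close>
definition times_levi_civita :: "levi_civita \<Rightarrow> levi_civita \<Rightarrow> levi_civita" where
  "times_levi_civita x y = Abs_lc (\<lambda>q.
     \<Sum>p\<in>{p. lc_rep x p \<noteq> 0 \<and> lc_rep y (q - p) \<noteq> 0}. lc_rep x p * lc_rep y (q - p))"

definition lc_pos :: "levi_civita \<Rightarrow> bool" where
  "lc_pos x \<longleftrightarrow> (\<exists>q. lc_rep x q > 0 \<and> (\<forall>p<q. lc_rep x p = 0))"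

definition less_levi_civita :: "levi_civita \<Rightarrow> levi_civita \<Rightarrow> bool" where
  "less_levi_civita x y \<longleftrightarrow> lc_pos (y - x)"

definition less_eq_levi_civita :: "levi_civita \<Rightarrow> levi_civita \<Rightarrow> bool" where
  "less_eq_levi_civita x y \<longleftrightarrow> x = y \<or> lc_pos (y - x)"

instance ..
end

definition lc_abs :: "levi_civita \<Rightarrow> levi_civita" where
  "lc_abs x = (if 0 \<le> x then x else - x)"

definition lc_tendsto :: "(nat \<Rightarrow> levi_civita) \<Rightarrow> levi_civita \<Rightarrow> bool" where
  "lc_tendsto f L \<longleftrightarrow> (\<forall>e>0. \<exists>N. \<forall>n\<ge>N. lc_abs (f n - L) < e)"

primrec lc_psum :: "(nat \<Rightarrow> levi_civita) \<Rightarrow> nat \<Rightarrow> levi_civita" where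
  "lc_psum f 0 = 0"
| "lc_psum f (Suc n) = lc_psum f n + f n"

definition lc_sums :: "(nat \<Rightarrow> levi_civita) \<Rightarrow> levi_civita \<Rightarrow> bool" where
  "lc_sums f s \<longleftrightarrow> lc_tendsto (lc_psum f) s"

definition lc_summable :: "(nat \<Rightarrow> levi_civita) \<Rightarrow> bool" where
  "lc_summable f \<longleftrightarrow> (\<exists>s. lc_sums f s)"

definition lc_suminf :: "(nat \<Rightarrow> levi_civita) \<Rightarrow> levi_civita" where
  "lc_suminf f = (THE s. lc_sums f s)"

definition is_inf :: "levi_civita set \<Rightarrow> levi_civita \<Rightarrow> bool" where
  "is_inf T m \<longleftrightarrow> (\<forall>t\<in>T. m \<le> t) \<and> (\<forall>m'. (\<forall>t\<in>T. m' \<le> t) \<longrightarrow> m' \<le> m)"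

definition is_sup :: "levi_civita set \<Rightarrow> levi_civita \<Rightarrow> bool" where
  "is_sup T m \<longleftrightarrow> (\<forall>t\<in>T. t \<le> m) \<and> (\<forall>m'. (\<forall>t\<in>T. t \<le> m') \<longrightarrow> m \<le> m')"

text \<open>An interval is given by (a, b, left closed?, right closed?) with a < b.\<close>
type_synonym lc_ivl = "levi_civita \<times> levi_civita \<times> bool \<times> bool"

fun is_ivl :: "lc_ivl \<Rightarrow> bool" where
  "is_ivl (a, b, lc, rc) \<longleftrightarrow> a < b"

fun ivl_set :: "lc_ivl \<Rightarrow> levi_civita set" where
  "ivl_set (a, b, lc, rc) =
     {x. (if lc then a \<le> x else a < x) \<and> (if rc then x \<le> b else x < b)}"

fun ivl_len :: "lc_ivl \<Rightarrow> levi_civita" where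
  "ivl_len (a, b, lc, rc) = b - a"

definition is_cover :: "(nat \<Rightarrow> lc_ivl) \<Rightarrow> levi_civita set \<Rightarrow> bool" where
  "is_cover S A \<longleftrightarrow> (\<forall>n. is_ivl (S n)) \<and> A \<subseteq> (\<Union>n. ivl_set (S n))
      \<and> lc_summable (\<lambda>n. ivl_len (S n))"

definition cover_sums :: "levi_civita set \<Rightarrow> levi_civita set" where
  "cover_sums A = {lc_suminf (\<lambda>n. ivl_len (S n)) | S. is_cover S A}"

definition outer_measurable :: "levi_civita set \<Rightarrow> bool" where
  "outer_measurable A \<longleftrightarrow> (\<exists>m. is_inf (cover_sums A) m)"

definition Mu :: "levi_civita set \<Rightarrow> levi_civita" where
  "Mu A = (THE m. is_inf (cover_sums A) m)"

definition L_measurable :: "levi_civita set \<Rightarrow> bool" where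
  "L_measurable A \<longleftrightarrow> outer_measurable A \<and>
     (\<forall>B. outer_measurable B \<longrightarrow>
        outer_measurable (A \<inter> B) \<and> outer_measurable (- A \<inter> B) \<and>
        Mu B = Mu (A \<inter> B) + Mu (- A \<inter> B))"

definition L_measure :: "levi_civita set \<Rightarrow> levi_civita" where
  "L_measure A = Mu A"

text \<open>Countable (possibly finite or empty) families of intervals: None = no interval.\<close>
type_synonym lc_fam = "nat \<Rightarrow> lc_ivl option"

definition fam_piece :: "lc_fam \<Rightarrow> nat \<Rightarrow> levi_civita set" where
  "fam_piece F n = (case F n of None \<Rightarrow> {} | Some I \<Rightarrow> ivl_set I)"

definition fam_len :: "lc_fam \<Rightarrow> nat \<Rightarrow> levi_civita" where
  "fam_len F n = (case F n of None \<Rightarrow> 0 | Some I \<Rightarrow> ivl_len I)"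

definition disj_fam :: "lc_fam \<Rightarrow> bool" where
  "disj_fam F \<longleftrightarrow> (\<forall>n I. F n = Some I \<longrightarrow> is_ivl I) \<and>
     (\<forall>m n. m \<noteq> n \<longrightarrow> fam_piece F m \<inter> fam_piece F n = {})"

definition inner_fam :: "lc_fam \<Rightarrow> levi_civita set \<Rightarrow> bool" where
  "inner_fam F A \<longleftrightarrow> disj_fam F \<and> (\<Union>n. fam_piece F n) \<subseteq> A \<and> lc_summable (fam_len F)"

definition outer_fam :: "lc_fam \<Rightarrow> levi_civita set \<Rightarrow> bool" where
  "outer_fam F A \<longleftrightarrow> disj_fam F \<and> A \<subseteq> (\<Union>n. fam_piece F n) \<and> lc_summable (fam_len F)"

definition S_measurable :: "levi_civita set \<Rightarrow> bool" where
  "S_measurable A \<longleftrightarrow> (\<forall>e>0. \<exists>I J. inner_fam I A \<and> outer_fam J A \<and>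
      lc_suminf (fam_len J) - lc_suminf (fam_len I) \<le> e)"

definition Ms :: "levi_civita set \<Rightarrow> levi_civita" where
  "Ms A = (THE m. is_sup {lc_suminf (fam_len I) | I. inner_fam I A} m)"

end

theory Submission
  imports Defs "HOL-Analysis.Continuum_Not_Denumerable"
begin


definition lf :: "(rat \<Rightarrow> real) \<Rightarrow> bool" where
  "lf f \<longleftrightarrow> (\<forall>q. finite {p. p \<le> q \<and> f p \<noteq> 0})"

lemma lf_rep[simp]: "lf (lc_rep x)"
  using lc_rep[of x] by (simp add: lf_def)

lemma rep_Abs[simp]: "lf f \<Longrightarrow> lc_rep (Abs_lc f) = f"
  by (rule Abs_lc_inverse) (simp add: lf_def)

lemma lf_add: "lf f \<Longrightarrow> lf g \<Longrightarrow> lf (\<lambda>q. f q + g q)"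
  unfolding lf_def
proof
  fix q assume a: "\<forall>q. finite {p. p \<le> q \<and> f p \<noteq> 0}" "\<forall>q. finite {p. p \<le> q \<and> g p \<noteq> 0}"
  have "{p. p \<le> q \<and> f p + g p \<noteq> 0} \<subseteq> {p. p \<le> q \<and> f p \<noteq> 0} \<union> {p. p \<le> q \<and> g p \<noteq> 0}" by auto
  then show "finite {p. p \<le> q \<and> f p + g p \<noteq> 0}" using a by (meson finite_Un finite_subset)
qed

lemma lf_neg: "lf f \<Longrightarrow> lf (\<lambda>q. - f q)" by (simp add: lf_def)
lemma lf_diff: "lf f \<Longrightarrow> lf g \<Longrightarrow> lf (\<lambda>q. f q - g q)"
  using lf_add[of f "\<lambda>q. - g q"] lf_neg[of g] by simp
lemma lf_zero[simp]: "lf (\<lambda>_. 0)" by (simp add: lf_def)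

lemma rep_zero[simp]: "lc_rep 0 q = 0" by (simp add: zero_levi_civita_def)
lemma rep_plus[simp]: "lc_rep (x + y) q = lc_rep x q + lc_rep y q"
  by (simp add: plus_levi_civita_def lf_add)
lemma rep_uminus[simp]: "lc_rep (- x) q = - lc_rep x q"
  by (simp add: uminus_levi_civita_def lf_neg)
lemma rep_minus[simp]: "lc_rep (x - y) q = lc_rep x q - lc_rep y q"
  by (simp add: minus_levi_civita_def lf_diff)

lemma lc_eqI: "(\<And>q. lc_rep x q = lc_rep y q) \<Longrightarrow> x = y"
  by (metis ext lc_rep_inject)

lemma lead_ex: assumes "x \<noteq> (0::levi_civita)" shows "\<exists>q. lc_rep x q \<noteq> 0 \<and> (\<forall>p<q. lc_rep x p = 0)"
proof -
  obtain q0 where q0: "lc_rep x q0 \<noteq> 0" using assms lc_eqI[of x 0] by auto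
  let ?S = "{p. p \<le> q0 \<and> lc_rep x p \<noteq> 0}"
  have fin: "finite ?S" using lf_rep[of x] by (simp add: lf_def)
  have ne: "?S \<noteq> {}" using q0 by auto
  let ?m = "Min ?S"
  have m: "?m \<in> ?S" using Min_in[OF fin ne] .
  have "\<forall>p<?m. lc_rep x p = 0"
  proof (intro allI impI, rule ccontr)
    fix p assume "p < ?m" "lc_rep x p \<noteq> 0"
    then have "p \<in> ?S" using m by auto
    then have "?m \<le> p" using Min_le[OF fin] by blast
    then show False using \<open>p < ?m\<close> by simp
  qed
  then show ?thesis using m by blast
qed

lemma pos_iff: "lc_pos x \<longleftrightarrow> (\<exists>q. lc_rep x q > 0 \<and> (\<forall>p<q. lc_rep x p = 0))"
  by (simp add: lc_pos_def)

lemma pos_nz: "lc_pos x \<Longrightarrow> x \<noteq> 0"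
  by (auto simp: lc_pos_def)

lemma lead_unique: "lc_rep x q \<noteq> 0 \<Longrightarrow> (\<forall>p<q. lc_rep x p = 0) \<Longrightarrow> lc_rep x q' \<noteq> 0 \<Longrightarrow> (\<forall>p<q'. lc_rep x p = 0) \<Longrightarrow> q = q'"
  by (meson linorder_neqE)


lemma pos_total: assumes "x \<noteq> 0" shows "lc_pos x \<or> lc_pos (- x)"
proof -
  obtain q where q: "lc_rep x q \<noteq> 0" "\<forall>p<q. lc_rep x p = 0" using lead_ex[OF assms] by blast
  show ?thesis
  proof (cases "lc_rep x q > 0")
    case True then show ?thesis using q unfolding lc_pos_def by blast
  next
    case False then have "lc_rep (-x) q > 0" using q by simp
    then show ?thesis using q unfolding lc_pos_def by (intro disjI2 exI[of _ q]) simp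
  qed
qed

lemma pos_not_both: assumes "lc_pos x" shows "\<not> lc_pos (- x)"
proof
  assume "lc_pos (-x)"
  then obtain b where b: "lc_rep x b < 0" "\<forall>p<b. lc_rep x p = 0" by (auto simp: lc_pos_def)
  obtain a where a: "lc_rep x a > 0" "\<forall>p<a. lc_rep x p = 0" using assms by (auto simp: lc_pos_def)
  have "a = b" using a b by (metis linorder_neqE order_less_irrefl)
  then show False using a b by simp
qed

lemma pos_add: assumes "lc_pos x" "lc_pos y" shows "lc_pos (x + y)"
proof -
  obtain a where a: "lc_rep x a > 0" "\<forall>p<a. lc_rep x p = 0" using assms(1) by (auto simp: lc_pos_def)
  obtain b where b: "lc_rep y b > 0" "\<forall>p<b. lc_rep y p = 0" using assms(2) by (auto simp: lc_pos_def)
  show ?thesis unfolding lc_pos_def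
  proof (cases a b rule: linorder_cases)
    case less then show "\<exists>q. 0 < lc_rep (x + y) q \<and> (\<forall>p<q. lc_rep (x + y) p = 0)"
      using a b by (intro exI[of _ a]) auto
  next
    case equal then show "\<exists>q. 0 < lc_rep (x + y) q \<and> (\<forall>p<q. lc_rep (x + y) p = 0)"
      using a b by (intro exI[of _ a]) auto
  next
    case greater then show "\<exists>q. 0 < lc_rep (x + y) q \<and> (\<forall>p<q. lc_rep (x + y) p = 0)"
      using a b by (intro exI[of _ b]) auto
  qed
qed

lemma neg_diff_lc: "- (b - a) = a - (b::levi_civita)" by (rule lc_eqI) simp
lemma diff_zero_lc: "b - a = 0 \<longleftrightarrow> a = (b::levi_civita)"
proof
  assume "b - a = 0" then show "a = b" by (intro lc_eqI) (metis rep_minus rep_zero right_minus_eq)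
qed (auto intro: lc_eqI)

instance levi_civita :: linordered_ab_group_add
proof
  fix a b c :: levi_civita
  show "a + b + c = a + (b + c)" by (rule lc_eqI) simp
  show "a + b = b + a" by (rule lc_eqI) simp
  show "0 + a = a" by (rule lc_eqI) simp
  show "- a + a = 0" by (rule lc_eqI) simp
  show "a - b = a + - b" by (rule lc_eqI) simp
  show "a \<le> a" by (simp add: less_eq_levi_civita_def)
  show "(a < b) = (a \<le> b \<and> \<not> b \<le> a)"
  proof -
    have "lc_pos (b - a) \<Longrightarrow> a \<noteq> b" using pos_nz diff_zero_lc by blast
    moreover have "lc_pos (b - a) \<Longrightarrow> \<not> lc_pos (a - b)" using pos_not_both neg_diff_lc by metis
    ultimately show ?thesis unfolding less_eq_levi_civita_def less_levi_civita_def
      using pos_nz diff_zero_lc by blast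
  qed
  show "a \<le> b \<Longrightarrow> b \<le> c \<Longrightarrow> a \<le> c"
  proof -
    assume "a \<le> b" "b \<le> c"
    moreover have "(c - b) + (b - a) = c - a" by (rule lc_eqI) simp
    ultimately show "a \<le> c" unfolding less_eq_levi_civita_def using pos_add by metis
  qed
  show "a \<le> b \<Longrightarrow> b \<le> a \<Longrightarrow> a = b"
  proof -
    assume "a \<le> b" "b \<le> a"
    then show "a = b" unfolding less_eq_levi_civita_def using pos_not_both neg_diff_lc by metis
  qed
  show "a \<le> b \<or> b \<le> a"
  proof -
    have "b - a \<noteq> 0 \<Longrightarrow> lc_pos (b - a) \<or> lc_pos (a - b)"
      using pos_total[of "b - a"] neg_diff_lc by metis
    then show ?thesis unfolding less_eq_levi_civita_def using diff_zero_lc by blast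
  qed
  show "a \<le> b \<Longrightarrow> c + a \<le> c + b"
  proof -
    assume "a \<le> b"
    moreover have "(c + b) - (c + a) = b - a" by (rule lc_eqI) simp
    ultimately show ?thesis unfolding less_eq_levi_civita_def by auto
  qed
qed



definition sm :: "rat \<Rightarrow> levi_civita \<Rightarrow> bool" where
  "sm Q x \<longleftrightarrow> (\<forall>p\<le>Q. lc_rep x p = 0)"

lemma lt_iff: "x < y \<longleftrightarrow> lc_pos (y - x)" by (simp add: less_levi_civita_def)
lemma pos0_iff: "0 < x \<longleftrightarrow> lc_pos x"
proof -
  have "x - 0 = x" by simp
  then show ?thesis by (simp add: less_levi_civita_def)
qed

lemma sm_zero[simp]: "sm Q 0" by (simp add: sm_def)
lemma sm_add: "sm Q x \<Longrightarrow> sm Q y \<Longrightarrow> sm Q (x + y)" by (simp add: sm_def)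
lemma sm_diff: "sm Q x \<Longrightarrow> sm Q y \<Longrightarrow> sm Q (x - y)" by (simp add: sm_def)
lemma sm_uminus[simp]: "sm Q (- x) \<longleftrightarrow> sm Q x" by (simp add: sm_def)
lemma sm_mono: "Q' \<le> Q \<Longrightarrow> sm Q x \<Longrightarrow> sm Q' x" by (simp add: sm_def)
lemma sm_diff_commute: "sm Q (x - y) \<longleftrightarrow> sm Q (y - x)"
  using sm_uminus[of Q "x - y"] by simp
lemma sm_all_zero: "(\<And>Q. sm Q x) \<Longrightarrow> x = 0"
  by (rule lc_eqI) (simp add: sm_def, blast)

lemma pos_lead: assumes "0 < x" shows "\<exists>q. lc_rep x q > 0 \<and> (\<forall>p<q. lc_rep x p = 0)"
  using assms by (simp add: pos0_iff lc_pos_def)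

lemma sm_less: assumes "sm Q u" "0 < v" "\<not> sm Q v" shows "u < v"
proof -
  obtain q where q: "lc_rep v q > 0" "\<forall>p<q. lc_rep v p = 0" using pos_lead[OF assms(2)] by blast
  obtain p where p: "p \<le> Q" "lc_rep v p \<noteq> 0" using assms(3) by (auto simp: sm_def)
  have "q \<le> p" using q(2) p(2) by (meson not_less)
  then have qQ: "q \<le> Q" using p by simp
  have "lc_pos (v - u)" unfolding lc_pos_def
    using q qQ assms(1) by (intro exI[of _ q]) (auto simp: sm_def)
  then show ?thesis by (simp add: lt_iff)
qed

lemma sm_le_sm: assumes "0 \<le> x" "x \<le> y" "sm Q y" shows "sm Q x"
proof (rule ccontr)
  assume n: "\<not> sm Q x"
  then have "x \<noteq> 0" by auto
  then have "0 < x" using assms(1) by simp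
  then have "y < x" using sm_less[OF assms(3) _ n] by simp
  then show False using assms(2) by simp
qed

lemma pos_not_sm: assumes "0 < e" shows "\<exists>Q. \<not> sm Q e"
proof -
  have "e \<noteq> 0" using assms by simp
  then obtain q where "lc_rep e q \<noteq> 0" using lc_eqI[of e 0] by auto
  then show ?thesis by (auto simp: sm_def)
qed

lemma not_sm_mono: "\<not> sm Q e \<Longrightarrow> Q \<le> Q' \<Longrightarrow> \<not> sm Q' e"
  using sm_mono by blast

lemma lc_abs_cases: "lc_abs x = x \<or> lc_abs x = - x" by (simp add: lc_abs_def)
lemma lc_abs_nonneg: "0 \<le> lc_abs x" unfolding lc_abs_def by (cases "0 \<le> x") auto
lemma sm_abs[simp]: "sm Q (lc_abs x) \<longleftrightarrow> sm Q x"
  using lc_abs_cases[of x] by auto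
lemma lc_abs_ge: "x \<le> lc_abs x" "- x \<le> lc_abs x" by (auto simp: lc_abs_def)

definition mon :: "real \<Rightarrow> rat \<Rightarrow> levi_civita" where
  "mon c t = Abs_lc (\<lambda>q. if q = t then c else 0)"

lemma lf_mon: "lf (\<lambda>q. if q = t then c else 0)"
proof -
  have "\<And>q. {p. p \<le> q \<and> (if p = t then c else 0) \<noteq> 0} \<subseteq> {t}" by auto
  then show ?thesis unfolding lf_def by (meson finite.emptyI finite_insert finite_subset)
qed

lemma rep_mon[simp]: "lc_rep (mon c t) q = (if q = t then c else 0)"
  by (simp add: mon_def lf_mon)

lemma mon_pos: "0 < c \<Longrightarrow> 0 < mon c t"
  unfolding pos0_iff lc_pos_def by (intro exI[of _ t]) auto

lemma sm_mon: "Q < t \<Longrightarrow> sm Q (mon c t)" by (auto simp: sm_def)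
lemma not_sm_mon: "c \<noteq> 0 \<Longrightarrow> t \<le> Q \<Longrightarrow> \<not> sm Q (mon c t)" by (auto simp: sm_def)

definition half :: "levi_civita \<Rightarrow> levi_civita" where
  "half x = Abs_lc (\<lambda>q. lc_rep x q / 2)"

lemma lf_half: "lf (\<lambda>q. lc_rep x q / 2)"
  using lf_rep[of x] by (simp add: lf_def)

lemma rep_half[simp]: "lc_rep (half x) q = lc_rep x q / 2"
  by (simp add: half_def lf_half)

lemma half_half: "half x + half x = x" by (rule lc_eqI) simp

lemma half_pos: "0 < x \<Longrightarrow> 0 < half x"
  unfolding pos0_iff lc_pos_def by auto

lemma half_less: "0 < x \<Longrightarrow> half x < x"
proof -
  assume "0 < x"
  then have "0 < half x" by (rule half_pos)
  then have "half x < half x + half x" by simp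
  then show ?thesis by (simp add: half_half)
qed

lemma le_eps: assumes "\<And>e. 0 < e \<Longrightarrow> x \<le> y + e" shows "x \<le> (y::levi_civita)"
proof (rule ccontr)
  assume "\<not> x \<le> y"
  then have "0 < x - y" by simp
  then have "x \<le> y + half (x - y)" using assms half_pos by blast
  moreover have "half (x - y) < x - y" using half_less \<open>0 < x - y\<close> by blast
  ultimately show False by (simp add: algebra_simps)
qed


section \<open>Limits\<close>

lemma tendsto_sm: "lc_tendsto f L \<longleftrightarrow> (\<forall>Q. \<exists>N. \<forall>n\<ge>N. sm Q (f n - L))"
proof
  assume a: "lc_tendsto f L"
  show "\<forall>Q. \<exists>N. \<forall>n\<ge>N. sm Q (f n - L)"
  proof
    fix Q :: rat
    have "0 < mon 1 (Q + 1)" by (rule mon_pos) simp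
    then obtain N where N: "\<forall>n\<ge>N. lc_abs (f n - L) < mon 1 (Q + 1)"
      using a unfolding lc_tendsto_def by blast
    have "\<forall>n\<ge>N. sm Q (f n - L)"
    proof (intro allI impI)
      fix n assume "n \<ge> N"
      then have "lc_abs (f n - L) \<le> mon 1 (Q + 1)" using N by (simp add: less_imp_le)
      then have "sm Q (lc_abs (f n - L))" using sm_le_sm[OF lc_abs_nonneg] sm_mon[of Q "Q+1" 1] by simp
      then show "sm Q (f n - L)" by simp
    qed
    then show "\<exists>N. \<forall>n\<ge>N. sm Q (f n - L)" by blast
  qed
next
  assume a: "\<forall>Q. \<exists>N. \<forall>n\<ge>N. sm Q (f n - L)"
  show "lc_tendsto f L" unfolding lc_tendsto_def
  proof (intro allI impI)
    fix e :: levi_civita assume e: "0 < e"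
    obtain Q where Q: "\<not> sm Q e" using pos_not_sm[OF e] by blast
    obtain N where "\<forall>n\<ge>N. sm Q (f n - L)" using a by blast
    then have "\<forall>n\<ge>N. lc_abs (f n - L) < e" using sm_less[OF _ e Q] by simp
    then show "\<exists>N. \<forall>n\<ge>N. lc_abs (f n - L) < e" by blast
  qed
qed

lemma tendsto_unique: assumes "lc_tendsto f L" "lc_tendsto f M" shows "L = M"
proof -
  have "\<And>Q. sm Q (L - M)"
  proof -
    fix Q
    obtain N1 where N1: "\<forall>n\<ge>N1. sm Q (f n - L)" using assms(1) by (auto simp: tendsto_sm)
    obtain N2 where N2: "\<forall>n\<ge>N2. sm Q (f n - M)" using assms(2) by (auto simp: tendsto_sm)
    have "sm Q ((f (max N1 N2) - M) - (f (max N1 N2) - L))" using N1 N2 by (rule_tac sm_diff) auto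
    then show "sm Q (L - M)" by simp
  qed
  then have "L - M = 0" by (rule sm_all_zero)
  then show ?thesis by simp
qed

lemma tendsto_add: assumes "lc_tendsto f L" "lc_tendsto g M" shows "lc_tendsto (\<lambda>n. f n + g n) (L + M)"
  unfolding tendsto_sm
proof
  fix Q
  obtain N1 where N1: "\<forall>n\<ge>N1. sm Q (f n - L)" using assms(1) by (auto simp: tendsto_sm)
  obtain N2 where N2: "\<forall>n\<ge>N2. sm Q (g n - M)" using assms(2) by (auto simp: tendsto_sm)
  have "\<forall>n\<ge>max N1 N2. sm Q ((f n + g n) - (L + M))"
  proof (intro allI impI)
    fix n assume "n \<ge> max N1 N2"
    then have "sm Q ((f n - L) + (g n - M))" using N1 N2 by (intro sm_add) auto
    then show "sm Q ((f n + g n) - (L + M))" by (simp add: algebra_simps)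
  qed
  then show "\<exists>N. \<forall>n\<ge>N. sm Q (f n + g n - (L + M))" by blast
qed

lemma tendsto_uminus: assumes "lc_tendsto f L" shows "lc_tendsto (\<lambda>n. - f n) (- L)"
proof -
  have e: "\<And>n. - f n - - L = - (f n - L)" by simp
  show ?thesis using assms unfolding tendsto_sm e sm_uminus .
qed

lemma tendsto_const: "lc_tendsto (\<lambda>n. c) c" unfolding tendsto_sm by simp

lemma tendsto_diff: assumes "lc_tendsto f L" "lc_tendsto g M" shows "lc_tendsto (\<lambda>n. f n - g n) (L - M)"
  using tendsto_add[OF assms(1) tendsto_uminus[OF assms(2)]] by simp

lemma tendsto_ge_const: assumes "lc_tendsto f L" "\<forall>n\<ge>N. c \<le> f n" shows "c \<le> L"
proof (rule ccontr)
  assume "\<not> c \<le> L"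
  then have d: "0 < c - L" by simp
  obtain Q where Q: "\<not> sm Q (c - L)" using pos_not_sm[OF d] by blast
  obtain N1 where N1: "\<forall>n\<ge>N1. sm Q (f n - L)" using assms(1) by (auto simp: tendsto_sm)
  have "f (max N N1) - L < c - L" using sm_less[OF _ d Q] N1 by simp
  moreover have "c \<le> f (max N N1)" using assms(2) by simp
  ultimately show False by simp
qed

lemma tendsto_le_const: assumes "lc_tendsto f L" "\<forall>n\<ge>N. f n \<le> c" shows "L \<le> c"
  using tendsto_ge_const[OF tendsto_uminus[OF assms(1)], of N "- c"] assms(2) by simp

lemma tendsto_mono: assumes "lc_tendsto f L" "lc_tendsto g M" "\<forall>n\<ge>N. f n \<le> g n" shows "L \<le> M"
proof -
  have "0 \<le> M - L" using tendsto_ge_const[OF tendsto_diff[OF assms(2,1)], of N 0] assms(3) by simp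
  then show ?thesis by simp
qed

lemma tendsto_sub2: assumes "lc_tendsto f L" shows "lc_tendsto (\<lambda>n. f (2 * n)) L"
  using assms unfolding tendsto_sm by (metis (no_types, lifting) le_trans mult_2 le_add1)

section \<open>Series\<close>

lemma psum_sum: "lc_psum f n = sum f {..<n}"
  by (induction n) (simp_all add: add.commute)

lemma rep_psum: "lc_rep (lc_psum f n) q = (\<Sum>k<n. lc_rep (f k) q)"
  by (induction n) simp_all

lemma sums_summable: "lc_sums f s \<Longrightarrow> lc_summable f" by (auto simp: lc_summable_def)

lemma sums_unique: "lc_sums f s \<Longrightarrow> lc_suminf f = s"
  unfolding lc_suminf_def lc_sums_def
  by (rule the_equality) (auto intro: tendsto_unique)

lemma summable_sums: "lc_summable f \<Longrightarrow> lc_sums f (lc_suminf f)"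
  using sums_unique by (auto simp: lc_summable_def)

lemma summable_terms0: assumes "lc_summable f" shows "\<exists>N. \<forall>n\<ge>N. sm Q (f n)"
proof -
  obtain s where s: "lc_sums f s" using assms by (auto simp: lc_summable_def)
  obtain N where N: "\<forall>n\<ge>N. sm Q (lc_psum f n - s)" using s by (auto simp: lc_sums_def tendsto_sm)
  have "\<forall>n\<ge>N. sm Q (f n)"
  proof (intro allI impI)
    fix n assume "n \<ge> N"
    then have a: "sm Q (lc_psum f (Suc n) - s)" "sm Q (lc_psum f n - s)" using N le_SucI by blast+
    have "sm Q ((lc_psum f (Suc n) - s) - (lc_psum f n - s))" by (rule sm_diff[OF a])
    then show "sm Q (f n)" by simp
  qed
  then show ?thesis by blast
qed

lemma psum_stable: assumes "\<forall>m\<ge>N. sm q (f m)" "n \<ge> N" "p \<le> q"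
  shows "lc_rep (lc_psum f n) p = lc_rep (lc_psum f N) p"
  using assms(2)
proof (induction n)
  case 0 then show ?case by simp
next
  case (Suc n)
  show ?case
  proof (cases "Suc n = N")
    case True then show ?thesis by simp
  next
    case False
    then have "n \<ge> N" using Suc.prems by simp
    then have "lc_rep (f n) p = 0" using assms(1,3) by (auto simp: sm_def)
    then show ?thesis using Suc.IH \<open>n \<ge> N\<close> by simp
  qed
qed

lemma complete: assumes "\<forall>Q. \<exists>N. \<forall>n\<ge>N. sm Q (f n)" shows "lc_summable f"
proof -
  define NN where "NN q = (SOME N. \<forall>n\<ge>N. sm q (f n))" for q
  have NN: "\<forall>n\<ge>NN q. sm q (f n)" for q
  proof -
    have "\<exists>N. \<forall>n\<ge>N. sm q (f n)" using assms by blast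
    then show ?thesis unfolding NN_def by (rule someI_ex)
  qed
  define L where "L q = lc_rep (lc_psum f (NN q)) q" for q
  have key: "p \<le> q \<Longrightarrow> n \<ge> NN q \<Longrightarrow> lc_rep (lc_psum f n) p = L p" for p q n
  proof -
    assume pq: "p \<le> q" and n: "n \<ge> NN q"
    have NNq: "\<forall>m\<ge>NN q. sm p (f m)" using NN[of q] sm_mono[OF pq] by blast
    have "lc_rep (lc_psum f n) p = lc_rep (lc_psum f (NN q)) p" using psum_stable[OF NNq n] by simp
    also have "\<dots> = lc_rep (lc_psum f (max (NN p) (NN q))) p"
      using psum_stable[OF NNq, of "max (NN p) (NN q)" p] by simp
    also have "\<dots> = lc_rep (lc_psum f (NN p)) p"
      using psum_stable[OF NN[of p], of "max (NN p) (NN q)" p] by simp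
    finally show ?thesis by (simp add: L_def)
  qed
  have lfL: "lf L" unfolding lf_def
  proof
    fix q
    have "{p. p \<le> q \<and> L p \<noteq> 0} \<subseteq> {p. p \<le> q \<and> lc_rep (lc_psum f (NN q)) p \<noteq> 0}"
      using key by auto
    then show "finite {p. p \<le> q \<and> L p \<noteq> 0}"
      using lf_rep[of "lc_psum f (NN q)"] unfolding lf_def by (meson finite_subset)
  qed
  have "lc_sums f (Abs_lc L)" unfolding lc_sums_def tendsto_sm
  proof
    fix Q
    have "\<forall>n\<ge>NN Q. sm Q (lc_psum f n - Abs_lc L)"
      using key lfL by (auto simp: sm_def)
    then show "\<exists>N. \<forall>n\<ge>N. sm Q (lc_psum f n - Abs_lc L)" by blast
  qed
  then show ?thesis by (rule sums_summable)
qed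

lemma psum_add: "lc_psum (\<lambda>n. f n + g n) n = lc_psum f n + lc_psum g n"
  by (induction n) (simp_all add: algebra_simps)

lemma sums_add: "lc_sums f a \<Longrightarrow> lc_sums g b \<Longrightarrow> lc_sums (\<lambda>n. f n + g n) (a + b)"
  unfolding lc_sums_def psum_add by (rule tendsto_add)

lemma summable_add: "lc_summable f \<Longrightarrow> lc_summable g \<Longrightarrow> lc_summable (\<lambda>n. f n + g n) \<and>
   lc_suminf (\<lambda>n. f n + g n) = lc_suminf f + lc_suminf g"
  using sums_add[OF summable_sums summable_sums] sums_unique sums_summable by metis

lemma psum_mono: "(\<And>n. f n \<le> g n) \<Longrightarrow> lc_psum f n \<le> lc_psum g n"
  by (induction n) (simp_all add: add_mono)

lemma summable_dom: assumes "\<And>n. 0 \<le> f n" "\<And>n. f n \<le> g n" "lc_summable g"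
  shows "lc_summable f" "lc_suminf f \<le> lc_suminf g"
proof -
  show sf: "lc_summable f"
  proof (rule complete, intro allI)
    fix Q
    obtain N where "\<forall>n\<ge>N. sm Q (g n)" using summable_terms0[OF assms(3)] by blast
    then have "\<forall>n\<ge>N. sm Q (f n)" using sm_le_sm assms(1,2) by blast
    then show "\<exists>N. \<forall>n\<ge>N. sm Q (f n)" by blast
  qed
  show "lc_suminf f \<le> lc_suminf g"
    using tendsto_mono[OF summable_sums[OF sf, unfolded lc_sums_def]
       summable_sums[OF assms(3), unfolded lc_sums_def], of 0] psum_mono assms(2) by blast
qed

lemma psum_nonneg_mono: "(\<And>n. 0 \<le> f n) \<Longrightarrow> m \<le> n \<Longrightarrow> lc_psum f m \<le> lc_psum f n"
proof (induction n)
  case 0 then show ?case by simp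
next
  case (Suc n)
  show ?case
  proof (cases "m \<le> n")
    case True
    have "lc_psum f m \<le> lc_psum f n" using Suc.IH[OF Suc.prems(1) True] .
    also have "\<dots> \<le> lc_psum f n + f n" using Suc.prems(1)[of n] by simp
    finally show ?thesis by simp
  next
    case False then have "m = Suc n" using Suc.prems(2) by simp
    then show ?thesis by simp
  qed
qed

lemma psum_le_suminf: assumes "\<And>n. 0 \<le> f n" "lc_summable f" shows "lc_psum f n \<le> lc_suminf f"
proof -
  have h: "lc_psum f n \<le> lc_psum f m" if "m \<ge> n" for m using psum_nonneg_mono[OF assms(1) that] .
  have s: "lc_tendsto (lc_psum f) (lc_suminf f)" using summable_sums[OF assms(2)] by (simp add: lc_sums_def)
  show ?thesis by (rule tendsto_ge_const[OF s, of n]) (simp add: h)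
qed

lemma suminf_nonneg: assumes "\<And>n. 0 \<le> f n" "lc_summable f" shows "0 \<le> lc_suminf f"
  using psum_le_suminf[OF assms, of 0] by simp

lemma sum_le_suminf: assumes "\<And>n. 0 \<le> f n" "lc_summable f" "finite A"
  shows "sum f A \<le> lc_suminf f"
proof -
  obtain N where "A \<subseteq> {..<N}" using assms(3) using finite_nat_set_iff_bounded by (metis lessThan_iff subsetI)
  then have "sum f A \<le> sum f {..<N}" by (intro sum_mono2) (auto simp: assms(1))
  also have "\<dots> \<le> lc_suminf f" using psum_le_suminf[OF assms(1,2), of N] by (simp add: psum_sum)
  finally show ?thesis .
qed

lemma sm_suminf: assumes "\<And>n. sm Q (f n)" "lc_summable f" shows "sm Q (lc_suminf f)"
proof -
  obtain N where N: "\<forall>n\<ge>N. sm Q (lc_psum f n - lc_suminf f)"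
    using summable_sums[OF assms(2)] by (auto simp: lc_sums_def tendsto_sm)
  have "sm Q (lc_psum f N)" using assms(1) by (induction N) (auto intro: sm_add)
  then have "sm Q (lc_psum f N - (lc_psum f N - lc_suminf f))" using N by (rule_tac sm_diff) auto
  then show ?thesis by simp
qed

definition ilv :: "(nat \<Rightarrow> 'a) \<Rightarrow> (nat \<Rightarrow> 'a) \<Rightarrow> nat \<Rightarrow> 'a" where
  "ilv f g n = (if even n then f (n div 2) else g (n div 2))"

lemma psum_ilv: "lc_psum (ilv f g) (2 * n) = lc_psum f n + lc_psum g n"
proof (induction n)
  case 0 then show ?case by simp
next
  case (Suc n)
  have "2 * Suc n = Suc (Suc (2 * n))" by simp
  then show ?case using Suc by (simp add: ilv_def algebra_simps)
qed

lemma sums_ilv: assumes "lc_sums f a" "lc_sums g b" shows "lc_sums (ilv f g) (a + b)"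
proof -
  have "lc_summable (ilv f g)"
  proof (rule complete, intro allI)
    fix Q
    obtain N1 where N1: "\<forall>n\<ge>N1. sm Q (f n)" using summable_terms0 sums_summable[OF assms(1)] by blast
    obtain N2 where N2: "\<forall>n\<ge>N2. sm Q (g n)" using summable_terms0 sums_summable[OF assms(2)] by blast
    have "\<forall>n\<ge>2 * (N1 + N2). sm Q (ilv f g n)" using N1 N2 by (auto simp: ilv_def)
    then show "\<exists>N. \<forall>n\<ge>N. sm Q (ilv f g n)" by blast
  qed
  then obtain L where L: "lc_tendsto (lc_psum (ilv f g)) L" by (auto simp: lc_summable_def lc_sums_def)
  have "lc_tendsto (\<lambda>n. lc_psum f n + lc_psum g n) L"
    using tendsto_sub2[OF L] by (simp add: psum_ilv)
  moreover have "lc_tendsto (\<lambda>n. lc_psum f n + lc_psum g n) (a + b)"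
    using assms by (simp add: lc_sums_def tendsto_add)
  ultimately have "L = a + b" using tendsto_unique by blast
  then show ?thesis using L by (simp add: lc_sums_def)
qed


definition fl :: "rat \<Rightarrow> nat \<Rightarrow> levi_civita" where
  "fl Q n = mon 1 (Q + of_nat n + 1)"

lemma fl_pos: "0 < fl Q n" by (simp add: fl_def mon_pos)

lemma fl_summable: "lc_summable (fl Q)"
proof (rule complete, intro allI)
  fix Q'
  obtain N :: nat where "Q' - Q < of_nat N" using reals_Archimedean2 by blast
  then have "\<forall>n\<ge>N. sm Q' (fl Q n)"
    unfolding fl_def by (auto intro!: sm_mon)
  then show "\<exists>N. \<forall>n\<ge>N. sm Q' (fl Q n)" by blast
qed

lemma fl_small: "sm Q (lc_suminf (fl Q))"
  by (rule sm_suminf[OF _ fl_summable]) (simp add: fl_def sm_mon)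

lemma fl_nonneg: "0 \<le> lc_suminf (fl Q)"
  using suminf_nonneg[OF _ fl_summable] fl_pos less_imp_le by blast

lemma fl_lt: assumes "0 < e" shows "\<exists>Q. lc_suminf (fl Q) < e"
proof -
  obtain Q where "\<not> sm Q e" using pos_not_sm[OF assms] by blast
  then show ?thesis using sm_less[OF fl_small assms] by blast
qed



lemma ivl_len_pos: "is_ivl I \<Longrightarrow> 0 < ivl_len I"
  by (cases I) auto

lemma ivl_len_nonneg: "is_ivl I \<Longrightarrow> 0 \<le> ivl_len I"
  using ivl_len_pos less_imp_le by blast

lemma ivl_set_bounds: "x \<in> ivl_set (a, b, lc, rc) \<Longrightarrow> a \<le> x \<and> x \<le> b"
  by (auto split: if_splits)

definition len :: "(nat \<Rightarrow> lc_ivl) \<Rightarrow> nat \<Rightarrow> levi_civita" where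
  "len S n = ivl_len (S n)"

definition valid :: "(nat \<Rightarrow> lc_ivl) \<Rightarrow> bool" where
  "valid S \<longleftrightarrow> (\<forall>n. is_ivl (S n)) \<and> lc_summable (len S)"

definition U :: "(nat \<Rightarrow> lc_ivl) \<Rightarrow> levi_civita set" where
  "U S = (\<Union>n. ivl_set (S n))"

definition ssum :: "(nat \<Rightarrow> lc_ivl) \<Rightarrow> levi_civita" where
  "ssum S = lc_suminf (len S)"

lemma len_eta: "len S = (\<lambda>n. ivl_len (S n))" by (rule ext) (simp add: len_def)

lemma is_cover_iff: "is_cover S X \<longleftrightarrow> valid S \<and> X \<subseteq> U S"
  by (auto simp: is_cover_def valid_def U_def len_eta)

lemma cover_sums_iff: "t \<in> cover_sums X \<longleftrightarrow> (\<exists>S. is_cover S X \<and> t = ssum S)"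
  by (auto simp: cover_sums_def ssum_def len_eta)

lemma len_nonneg: "valid S \<Longrightarrow> 0 \<le> len S n"
  by (simp add: valid_def len_def ivl_len_nonneg)

lemma ssum_nonneg: "valid S \<Longrightarrow> 0 \<le> ssum S"
  unfolding ssum_def by (rule suminf_nonneg) (auto simp: len_nonneg valid_def)

lemma is_cover_mono: "is_cover S X \<Longrightarrow> Y \<subseteq> X \<Longrightarrow> is_cover S Y"
  by (auto simp: is_cover_iff)

section \<open>Infima and outer measure\<close>

lemma is_inf_unique: assumes "is_inf T m" "is_inf T m'" shows "m = m'"
proof -
  have "\<forall>t\<in>T. m \<le> t" "\<forall>t\<in>T. m' \<le> t" using assms unfolding is_inf_def by blast+
  then have "m' \<le> m" "m \<le> m'" using assms unfolding is_inf_def by blast+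
  then show ?thesis by (rule order_antisym[rotated])
qed

lemma Mu_inf: "outer_measurable X \<Longrightarrow> is_inf (cover_sums X) (Mu X)"
proof -
  assume "outer_measurable X"
  then obtain m where m: "is_inf (cover_sums X) m" unfolding outer_measurable_def by blast
  have "Mu X = m" unfolding Mu_def using m is_inf_unique by blast
  then show ?thesis using m by simp
qed

lemma Mu_eqI: "is_inf (cover_sums X) m \<Longrightarrow> outer_measurable X \<and> Mu X = m"
  using Mu_inf is_inf_unique outer_measurable_def by blast

lemma Mu_le: "outer_measurable X \<Longrightarrow> is_cover S X \<Longrightarrow> Mu X \<le> ssum S"
proof -
  assume a: "outer_measurable X" "is_cover S X"
  have "ssum S \<in> cover_sums X" using a(2) cover_sums_iff by blast
  then show ?thesis using Mu_inf[OF a(1)] unfolding is_inf_def by blast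
qed

lemma Mu_ge: "outer_measurable X \<Longrightarrow> (\<And>S. is_cover S X \<Longrightarrow> c \<le> ssum S) \<Longrightarrow> c \<le> Mu X"
proof -
  assume a: "outer_measurable X" "\<And>S. is_cover S X \<Longrightarrow> c \<le> ssum S"
  have "\<forall>t\<in>cover_sums X. c \<le> t" using a(2) by (auto simp: cover_sums_iff)
  then show ?thesis using Mu_inf[OF a(1)] unfolding is_inf_def by blast
qed

lemma Mu_approx: assumes "outer_measurable X" "0 < e"
  shows "\<exists>S. is_cover S X \<and> ssum S < Mu X + e"
proof (rule ccontr)
  assume "\<not> ?thesis"
  then have "\<And>S. is_cover S X \<Longrightarrow> Mu X + e \<le> ssum S" by (meson not_less)
  then have "Mu X + e \<le> Mu X" using Mu_ge[OF assms(1)] by blast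
  then show False using assms(2) by simp
qed

lemma Mu_mono: "outer_measurable X \<Longrightarrow> outer_measurable Y \<Longrightarrow> X \<subseteq> Y \<Longrightarrow> Mu X \<le> Mu Y"
proof -
  assume a: "outer_measurable X" "outer_measurable Y" "X \<subseteq> Y"
  show "Mu X \<le> Mu Y"
  proof (rule Mu_ge[OF a(2)])
    fix S assume "is_cover S Y"
    then have "is_cover S X" using is_cover_mono a(3) by blast
    then show "Mu X \<le> ssum S" using Mu_le a(1) by blast
  qed
qed

lemma mon_anti: "mon 1 (of_nat (Suc k)) \<le> mon 1 (of_nat k)"
proof -
  have a: "sm (of_nat k) (mon 1 (of_nat (Suc k)))" by (rule sm_mon) simp
  have b: "\<not> sm (of_nat k) (mon 1 (of_nat k))" by (rule not_sm_mon) simp_all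
  have c: "0 < mon 1 (of_nat k)" by (rule mon_pos) simp
  have "mon 1 (of_nat (Suc k)) < mon 1 (of_nat k)" by (rule sm_less[OF a c b])
  then show ?thesis by simp
qed

lemma sm_between: assumes "- a \<le> d" "d \<le> a" "sm Q a" shows "sm Q d"
proof (cases "0 \<le> d")
  case True then show ?thesis using sm_le_sm assms by blast
next
  case False
  then have "0 \<le> - d" "- d \<le> a" using assms(1) by (auto simp: minus_le_iff)
  then show ?thesis using sm_le_sm assms(3) sm_uminus by blast
qed

lemma psum_telescope: "lc_psum (\<lambda>k. x (Suc k) - x k) n = x n - x 0"
  by (induction n) simp_all

lemma width_inf:
  assumes "\<And>e. 0 < e \<Longrightarrow> \<exists>x\<in>T. \<exists>l. (\<forall>y\<in>T. l \<le> y) \<and> x - l \<le> e"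
  shows "\<exists>m. is_inf T m"
proof -
  define E where "E n = mon 1 (of_nat n)" for n :: nat
  have Epos: "0 < E n" for n by (simp add: E_def mon_pos)
  have "\<forall>n. \<exists>p. fst p \<in> T \<and> (\<forall>y\<in>T. snd p \<le> y) \<and> fst p - snd p \<le> E n"
  proof
    fix n
    obtain x where "x \<in> T" "\<exists>l. (\<forall>y\<in>T. l \<le> y) \<and> x - l \<le> E n" using assms[OF Epos[of n]] by blast
    then show "\<exists>p. fst p \<in> T \<and> (\<forall>y\<in>T. snd p \<le> y) \<and> fst p - snd p \<le> E n" by auto
  qed
  from choice[OF this] obtain P where P: "\<forall>n. fst (P n) \<in> T \<and> (\<forall>y\<in>T. snd (P n) \<le> y) \<and> fst (P n) - snd (P n) \<le> E n"
    by blast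
  define x where "x n = fst (P n)" for n
  define l where "l n = snd (P n)" for n
  have xl: "\<And>n. x n \<in> T" "\<And>n y. y \<in> T \<Longrightarrow> l n \<le> y" "\<And>n. x n - l n \<le> E n"
    using P unfolding x_def l_def by blast+
  define d where "d k = x (Suc k) - x k" for k
  have d1: "d k \<le> E k" for k
  proof -
    have "l (Suc k) \<le> x k" using xl by blast
    then have "d k \<le> x (Suc k) - l (Suc k)" by (simp add: d_def)
    also have "\<dots> \<le> E (Suc k)" using xl by blast
    also have "\<dots> \<le> E k" unfolding E_def by (rule mon_anti)
    finally show ?thesis .
  qed
  have d2: "- E k \<le> d k" for k
  proof -
    have "l k \<le> x (Suc k)" using xl by blast
    then have "x k - l k \<ge> - d k" by (simp add: d_def)
    then have "- d k \<le> E k" using xl(3)[of k] by (rule order_trans)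
    then show ?thesis by (simp add: minus_le_iff)
  qed
  have smE: "sm Q (E k)" if "Q < of_nat k" for Q k unfolding E_def using that by (rule sm_mon)
  have "lc_summable d"
  proof (rule complete, intro allI)
    fix Q :: rat
    obtain N :: nat where N: "Q < of_nat N" using reals_Archimedean2 by blast
    have "\<forall>n\<ge>N. sm Q (d n)"
    proof (intro allI impI)
      fix n assume "N \<le> n"
      then have "Q < of_nat n" using N by (simp add: less_le_trans)
      then show "sm Q (d n)" using sm_between d1 d2 smE by blast
    qed
    then show "\<exists>N. \<forall>n\<ge>N. sm Q (d n)" by blast
  qed
  then obtain s where s: "lc_tendsto (lc_psum d) s" by (auto simp: lc_summable_def lc_sums_def)
  have px: "lc_psum d n + x 0 = x n" for n unfolding d_def psum_telescope by simp
  have xL: "lc_tendsto x (s + x 0)"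
    using tendsto_add[OF s tendsto_const[of "x 0"]] by (simp add: px)
  have E0: "lc_tendsto E 0"
    unfolding tendsto_sm
  proof
    fix Q :: rat
    obtain N :: nat where N: "Q < of_nat N" using reals_Archimedean2 by blast
    have "\<forall>n\<ge>N. sm Q (E n - 0)"
      using smE N by auto
    then show "\<exists>N. \<forall>n\<ge>N. sm Q (E n - 0)" by blast
  qed
  have "is_inf T (s + x 0)" unfolding is_inf_def
  proof (intro conjI ballI allI impI)
    fix y assume y: "y \<in> T"
    have "\<forall>n\<ge>0. x n - E n \<le> y"
    proof (intro allI impI)
      fix n :: nat
      have "x n - E n \<le> l n" using xl(3)[of n] by (simp add: algebra_simps)
      also have "\<dots> \<le> y" using xl(2) y by blast
      finally show "x n - E n \<le> y" .
    qed
    then show "s + x 0 \<le> y" using tendsto_le_const[OF tendsto_diff[OF xL E0]] by simp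
  next
    fix m' assume "\<forall>t\<in>T. m' \<le> t"
    then have "\<forall>n\<ge>0. m' \<le> x n" using xl(1) by blast
    then show "m' \<le> s + x 0" using tendsto_ge_const[OF xL] by blast
  qed
  then show ?thesis by blast
qed


definition fc :: "rat \<Rightarrow> levi_civita \<Rightarrow> nat \<Rightarrow> lc_ivl" where
  "fc Q c n = (c, c + fl Q n, True, True)"

lemma fc_ivl: "is_ivl (fc Q c n)" using fl_pos[of Q n] by (simp add: fc_def)
lemma fc_len: "ivl_len (fc Q c n) = fl Q n" by (simp add: fc_def)
lemma fc_mem: "c \<in> ivl_set (fc Q c n)" using fl_pos[of Q n] by (simp add: fc_def)
lemma len_fc: "len (fc Q c) = fl Q" by (rule ext) (simp add: len_def fc_len)
lemma fc_valid: "valid (fc Q c)" by (simp add: valid_def fc_ivl len_fc fl_summable)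
lemma fc_ssum: "ssum (fc Q c) = lc_suminf (fl Q)" by (simp add: ssum_def len_fc)

lemma small_filler: "0 < e \<Longrightarrow> \<exists>Q. valid (fc Q c) \<and> ssum (fc Q c) < e"
  using fl_lt fc_valid fc_ssum by metis

lemma disj_fam_ivl: "disj_fam F \<Longrightarrow> F n = Some I \<Longrightarrow> is_ivl I"
  unfolding disj_fam_def by blast

lemma fam_len_nonneg: "disj_fam F \<Longrightarrow> 0 \<le> fam_len F n"
proof (cases "F n")
  case None then show ?thesis by (simp add: fam_len_def)
next
  case (Some I)
  assume "disj_fam F"
  then have "is_ivl I" using Some unfolding disj_fam_def by blast
  then show ?thesis using Some by (simp add: fam_len_def ivl_len_nonneg)
qed

definition famc :: "lc_fam \<Rightarrow> rat \<Rightarrow> nat \<Rightarrow> lc_ivl" where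
  "famc F Q n = (case F n of Some I \<Rightarrow> I | None \<Rightarrow> fc Q 0 n)"

lemma famc:
  assumes "disj_fam F" "lc_summable (fam_len F)"
  shows "valid (famc F Q)" "(\<Union>n. fam_piece F n) \<subseteq> U (famc F Q)"
    "ssum (famc F Q) \<le> lc_suminf (fam_len F) + lc_suminf (fl Q)"
proof -
  have iv: "is_ivl (famc F Q n)" for n
    using disj_fam_ivl[OF assms(1)] fc_ivl by (cases "F n") (auto simp: famc_def)
  have le: "len (famc F Q) n \<le> fam_len F n + fl Q n" for n
    using fam_len_nonneg[OF assms(1), of n] fl_pos[of Q n]
    by (cases "F n") (auto simp: famc_def len_def fam_len_def fc_len)
  have ge: "0 \<le> len (famc F Q) n" for n using iv by (simp add: len_def ivl_len_nonneg)
  have sa: "lc_summable (\<lambda>n. fam_len F n + fl Q n)" "lc_suminf (\<lambda>n. fam_len F n + fl Q n) = lc_suminf (fam_len F) + lc_suminf (fl Q)"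
    using summable_add[OF assms(2) fl_summable] by auto
  show "valid (famc F Q)" using summable_dom(1)[OF ge le sa(1)] iv by (simp add: valid_def)
  show "ssum (famc F Q) \<le> lc_suminf (fam_len F) + lc_suminf (fl Q)"
    using summable_dom(2)[OF ge le sa(1)] sa(2) by (simp add: ssum_def)
  show "(\<Union>n. fam_piece F n) \<subseteq> U (famc F Q)"
  proof
    fix x assume "x \<in> (\<Union>n. fam_piece F n)"
    then obtain n where "x \<in> fam_piece F n" by blast
    then have "x \<in> ivl_set (famc F Q n)" by (cases "F n") (auto simp: fam_piece_def famc_def)
    then show "x \<in> U (famc F Q)" by (auto simp: U_def)
  qed
qed

lemma len_ilv: "len (ilv S T) = ilv (len S) (len T)"
  by (rule ext) (simp add: len_def ilv_def)

lemma ilv_cover: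
  assumes "valid S" "valid T"
  shows "valid (ilv S T)" "U (ilv S T) = U S \<union> U T" "ssum (ilv S T) = ssum S + ssum T"
proof -
  have s: "lc_sums (len (ilv S T)) (ssum S + ssum T)"
    unfolding len_ilv ssum_def
    by (rule sums_ilv) (use assms in \<open>auto simp: valid_def intro: summable_sums\<close>)
  show "valid (ilv S T)" using assms s sums_summable by (auto simp: valid_def ilv_def)
  show "ssum (ilv S T) = ssum S + ssum T" using s sums_unique by (simp add: ssum_def)
  show "U (ilv S T) = U S \<union> U T"
  proof
    show "U (ilv S T) \<subseteq> U S \<union> U T" by (auto simp: U_def ilv_def split: if_splits)
  next
    show "U S \<union> U T \<subseteq> U (ilv S T)"
    proof
      fix x assume "x \<in> U S \<union> U T"
      then show "x \<in> U (ilv S T)"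
      proof
        assume "x \<in> U S"
        then obtain n where "x \<in> ivl_set (S n)" by (auto simp: U_def)
        then have "x \<in> ivl_set (ilv S T (2 * n))" by (simp add: ilv_def)
        then show ?thesis by (auto simp: U_def)
      next
        assume "x \<in> U T"
        then obtain n where "x \<in> ivl_set (T n)" by (auto simp: U_def)
        then have "x \<in> ivl_set (ilv S T (Suc (2 * n)))" by (simp add: ilv_def)
        then show ?thesis by (auto simp: U_def)
      qed
    qed
  qed
qed

section \<open>Caratheodory criterion\<close>

definition Lprop :: "levi_civita set \<Rightarrow> bool" where
  "Lprop E \<longleftrightarrow> (\<forall>B. outer_measurable B \<longrightarrow>
        outer_measurable (E \<inter> B) \<and> outer_measurable (- E \<inter> B) \<and>
        Mu B = Mu (E \<inter> B) + Mu (- E \<inter> B))"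

definition Cprop :: "levi_civita set \<Rightarrow> bool" where
  "Cprop E \<longleftrightarrow> (\<forall>B. outer_measurable B \<longrightarrow> (\<forall>e>0. \<exists>S1 S2. is_cover S1 (E \<inter> B) \<and>
      is_cover S2 (- E \<inter> B) \<and> ssum S1 + ssum S2 \<le> Mu B + e))"

lemma Cprop_Lprop: assumes "Cprop E" shows "Lprop E"
  unfolding Lprop_def
proof (intro allI impI)
  fix B assume B: "outer_measurable B"
  have lower: "Mu B \<le> ssum C1 + ssum C2" if "is_cover C1 (E \<inter> B)" "is_cover C2 (- E \<inter> B)" for C1 C2
  proof -
    have v: "valid C1" "valid C2" using that by (auto simp: is_cover_iff)
    have "B \<subseteq> U (ilv C1 C2)" using that ilv_cover(2)[OF v] by (auto simp: is_cover_iff)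
    then have "is_cover (ilv C1 C2) B" using ilv_cover(1)[OF v] by (simp add: is_cover_iff)
    then show ?thesis using Mu_le[OF B] ilv_cover(3)[OF v] by metis
  qed
  have ap: "\<exists>S1 S2. is_cover S1 (E \<inter> B) \<and> is_cover S2 (- E \<inter> B) \<and> ssum S1 + ssum S2 \<le> Mu B + e"
    if "0 < e" for e using assms B that unfolding Cprop_def by blast
  have i1: "\<exists>m. is_inf (cover_sums (E \<inter> B)) m"
  proof (rule width_inf)
    fix e :: levi_civita assume e: "0 < e"
    obtain S1 S2 where S: "is_cover S1 (E \<inter> B)" "is_cover S2 (- E \<inter> B)" "ssum S1 + ssum S2 \<le> Mu B + e"
      using ap[OF e] by blast
    have "\<forall>y\<in>cover_sums (E \<inter> B). Mu B - ssum S2 \<le> y"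
      using lower S(2) by (auto simp: cover_sums_iff algebra_simps)
    moreover have "ssum S1 - (Mu B - ssum S2) \<le> e" using S(3) by (simp add: algebra_simps)
    moreover have "ssum S1 \<in> cover_sums (E \<inter> B)" using S(1) cover_sums_iff by blast
    ultimately show "\<exists>x\<in>cover_sums (E \<inter> B). \<exists>l. (\<forall>y\<in>cover_sums (E \<inter> B). l \<le> y) \<and> x - l \<le> e"
      by blast
  qed
  have i2: "\<exists>m. is_inf (cover_sums (- E \<inter> B)) m"
  proof (rule width_inf)
    fix e :: levi_civita assume e: "0 < e"
    obtain S1 S2 where S: "is_cover S1 (E \<inter> B)" "is_cover S2 (- E \<inter> B)" "ssum S1 + ssum S2 \<le> Mu B + e"
      using ap[OF e] by blast
    have "\<forall>y\<in>cover_sums (- E \<inter> B). Mu B - ssum S1 \<le> y"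
    proof
      fix y assume "y \<in> cover_sums (- E \<inter> B)"
      then obtain C where C: "is_cover C (- E \<inter> B)" "y = ssum C" by (auto simp: cover_sums_iff)
      have "Mu B \<le> ssum S1 + ssum C" by (rule lower[OF S(1) C(1)])
      then show "Mu B - ssum S1 \<le> y" using C(2) by (simp add: algebra_simps)
    qed
    moreover have "ssum S2 - (Mu B - ssum S1) \<le> e" using S(3) by (simp add: algebra_simps)
    moreover have "ssum S2 \<in> cover_sums (- E \<inter> B)" using S(2) cover_sums_iff by blast
    ultimately show "\<exists>x\<in>cover_sums (- E \<inter> B). \<exists>l. (\<forall>y\<in>cover_sums (- E \<inter> B). l \<le> y) \<and> x - l \<le> e"
      by blast
  qed
  have o1: "outer_measurable (E \<inter> B)" using i1 by (simp add: outer_measurable_def)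
  have o2: "outer_measurable (- E \<inter> B)" using i2 by (simp add: outer_measurable_def)
  have "Mu B \<le> Mu (E \<inter> B) + Mu (- E \<inter> B)"
  proof -
    have "Mu B - ssum C2 \<le> Mu (E \<inter> B)" if "is_cover C2 (- E \<inter> B)" for C2
      using Mu_ge[OF o1, of "Mu B - ssum C2"] lower that by (simp add: algebra_simps)
    then have "Mu B - Mu (E \<inter> B) \<le> Mu (- E \<inter> B)"
      using Mu_ge[OF o2, of "Mu B - Mu (E \<inter> B)"] by (simp add: algebra_simps)
    then show ?thesis by (simp add: algebra_simps)
  qed
  moreover have "Mu (E \<inter> B) + Mu (- E \<inter> B) \<le> Mu B"
  proof (rule le_eps)
    fix e :: levi_civita assume e: "0 < e"
    obtain S1 S2 where S: "is_cover S1 (E \<inter> B)" "is_cover S2 (- E \<inter> B)" "ssum S1 + ssum S2 \<le> Mu B + e"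
      using ap[OF e] by blast
    have "Mu (E \<inter> B) + Mu (- E \<inter> B) \<le> ssum S1 + ssum S2"
      using Mu_le[OF o1 S(1)] Mu_le[OF o2 S(2)] by (rule add_mono)
    then show "Mu (E \<inter> B) + Mu (- E \<inter> B) \<le> Mu B + e" using S(3) by (rule order_trans)
  qed
  ultimately show "outer_measurable (E \<inter> B) \<and> outer_measurable (- E \<inter> B) \<and> Mu B = Mu (E \<inter> B) + Mu (- E \<inter> B)"
    using o1 o2 by simp
qed


definition CovProp :: "levi_civita set \<Rightarrow> bool" where
  "CovProp E \<longleftrightarrow> (\<forall>S e. valid S \<longrightarrow> 0 < e \<longrightarrow> (\<exists>S1 S2. valid S1 \<and> valid S2 \<and>
      E \<inter> U S \<subseteq> U S1 \<and> - E \<inter> U S \<subseteq> U S2 \<and> ssum S1 + ssum S2 \<le> ssum S + e))"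

lemma CovPropD: "CovProp E \<Longrightarrow> valid S \<Longrightarrow> 0 < e \<Longrightarrow> \<exists>S1 S2. valid S1 \<and> valid S2 \<and>
      E \<inter> U S \<subseteq> U S1 \<and> - E \<inter> U S \<subseteq> U S2 \<and> ssum S1 + ssum S2 \<le> ssum S + e"
  unfolding CovProp_def by blast

lemma CovProp_Cprop: assumes "CovProp E" shows "Cprop E"
  unfolding Cprop_def
proof (intro allI impI)
  fix B :: "levi_civita set" and e :: levi_civita
  assume B: "outer_measurable B" and e: "0 < e"
  obtain S where S: "is_cover S B" "ssum S < Mu B + half e" using Mu_approx[OF B half_pos[OF e]] by blast
  have vS: "valid S" using S(1) by (simp add: is_cover_iff)
  obtain S1 S2 where T: "valid S1" "valid S2" "E \<inter> U S \<subseteq> U S1" "- E \<inter> U S \<subseteq> U S2"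
      "ssum S1 + ssum S2 \<le> ssum S + half e"
    using CovPropD[OF assms vS half_pos[OF e]] by blast
  have "is_cover S1 (E \<inter> B)" "is_cover S2 (- E \<inter> B)" using T S(1) by (auto simp: is_cover_iff)
  moreover have "ssum S1 + ssum S2 \<le> Mu B + e"
  proof -
    have "ssum S + half e \<le> Mu B + half e + half e" using S(2) by simp
    then have "ssum S1 + ssum S2 \<le> Mu B + half e + half e" using T(5) by (rule order_trans[rotated])
    then show ?thesis by (simp add: half_half add.assoc)
  qed
  ultimately show "\<exists>S1 S2. is_cover S1 (E \<inter> B) \<and> is_cover S2 (- E \<inter> B) \<and> ssum S1 + ssum S2 \<le> Mu B + e"
    by blast
qed

lemma CovProp_compl: assumes "CovProp E" shows "CovProp (- E)"
  unfolding CovProp_def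
proof (intro allI impI)
  fix S :: "nat \<Rightarrow> lc_ivl" and e :: levi_civita assume "valid S" "0 < e"
  then obtain S1 S2 where T: "valid S1" "valid S2" "E \<inter> U S \<subseteq> U S1" "- E \<inter> U S \<subseteq> U S2"
      "ssum S1 + ssum S2 \<le> ssum S + e" using CovPropD[OF assms] by blast
  then show "\<exists>S1 S2. valid S1 \<and> valid S2 \<and> - E \<inter> U S \<subseteq> U S1 \<and> - (- E) \<inter> U S \<subseteq> U S2 \<and>
      ssum S1 + ssum S2 \<le> ssum S + e"
    by (intro exI[of _ S2] exI[of _ S1]) (simp add: add.commute)
qed

lemma CovProp_inter: assumes "CovProp E" "CovProp F" shows "CovProp (E \<inter> F)"
  unfolding CovProp_def
proof (intro allI impI)
  fix S :: "nat \<Rightarrow> lc_ivl" and e :: levi_civita assume vS: "valid S" and e: "0 < e"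
  obtain S1 S2 where T: "valid S1" "valid S2" "E \<inter> U S \<subseteq> U S1" "- E \<inter> U S \<subseteq> U S2"
      "ssum S1 + ssum S2 \<le> ssum S + half e" using CovPropD[OF assms(1) vS half_pos[OF e]] by blast
  obtain D1 D2 where D: "valid D1" "valid D2" "F \<inter> U S1 \<subseteq> U D1" "- F \<inter> U S1 \<subseteq> U D2"
      "ssum D1 + ssum D2 \<le> ssum S1 + half e" using CovPropD[OF assms(2) T(1) half_pos[OF e]] by blast
  have "(E \<inter> F) \<inter> U S \<subseteq> U D1" using T(3) D(3) by blast
  moreover have "- (E \<inter> F) \<inter> U S \<subseteq> U (ilv S2 D2)"
    using T(3,4) D(4) ilv_cover(2)[OF T(2) D(2)] by blast
  moreover have "ssum D1 + ssum (ilv S2 D2) \<le> ssum S + e"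
  proof -
    have "ssum D1 + ssum (ilv S2 D2) = (ssum D1 + ssum D2) + ssum S2"
      using ilv_cover(3)[OF T(2) D(2)] by (simp add: algebra_simps)
    also have "\<dots> \<le> ssum S1 + half e + ssum S2" using D(5) by simp
    also have "\<dots> = (ssum S1 + ssum S2) + half e" by (simp add: algebra_simps)
    also have "\<dots> \<le> ssum S + half e + half e" using T(5) by simp
    also have "\<dots> = ssum S + e" by (simp add: half_half add.assoc)
    finally show ?thesis .
  qed
  ultimately show "\<exists>S1 S2. valid S1 \<and> valid S2 \<and> (E \<inter> F) \<inter> U S \<subseteq> U S1 \<and> - (E \<inter> F) \<inter> U S \<subseteq> U S2 \<and>
      ssum S1 + ssum S2 \<le> ssum S + e"
    using D(1) ilv_cover(1)[OF T(2) D(2)] by blast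
qed

lemma CovProp_union: assumes "CovProp E" "CovProp F" shows "CovProp (E \<union> F)"
proof -
  have "E \<union> F = - (- E \<inter> - F)" by blast
  then show ?thesis using CovProp_compl CovProp_inter assms by metis
qed

lemma CovProp_empty: "CovProp {}"
  unfolding CovProp_def
proof (intro allI impI)
  fix S :: "nat \<Rightarrow> lc_ivl" and e :: levi_civita assume vS: "valid S" and e: "0 < e"
  obtain Q where Q: "valid (fc Q 0)" "ssum (fc Q 0) < e" using small_filler[OF e] by blast
  show "\<exists>S1 S2. valid S1 \<and> valid S2 \<and> {} \<inter> U S \<subseteq> U S1 \<and> - {} \<inter> U S \<subseteq> U S2 \<and> ssum S1 + ssum S2 \<le> ssum S + e"
    using Q vS by (intro exI[of _ "fc Q 0"] exI[of _ S]) (simp add: add.commute less_imp_le)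
qed

section \<open>Half-lines and intervals\<close>

definition hl :: "levi_civita \<Rightarrow> bool \<Rightarrow> levi_civita set" where
  "hl c cl = {x. x < c \<or> (cl \<and> x = c)}"

fun lpc :: "levi_civita \<Rightarrow> bool \<Rightarrow> levi_civita \<Rightarrow> lc_ivl \<Rightarrow> lc_ivl" where
  "lpc c cl f (lo, hi, lc, rc) =
     (if hi < c then (lo, hi, lc, rc) else if lo < c then (lo, c, lc, cl) else (c, c + f, True, True))"

fun rpc :: "levi_civita \<Rightarrow> bool \<Rightarrow> levi_civita \<Rightarrow> lc_ivl \<Rightarrow> lc_ivl" where
  "rpc c cl f (lo, hi, lc, rc) =
     (if c < lo then (lo, hi, lc, rc) else if c < hi then (c, hi, \<not> cl, rc) else (c, c + f, True, True))"

lemma lpc_ivl: "is_ivl I \<Longrightarrow> 0 < f \<Longrightarrow> is_ivl (lpc c cl f I)"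
  by (cases I) auto

lemma rpc_ivl: "is_ivl I \<Longrightarrow> 0 < f \<Longrightarrow> is_ivl (rpc c cl f I)"
  by (cases I) auto

lemma lrpc_len: assumes "is_ivl I" "0 < f"
  shows "ivl_len (lpc c cl f I) + ivl_len (rpc c cl f I) \<le> ivl_len I + f"
proof -
  obtain lo hi lc rc where I: "I = (lo, hi, lc, rc)" by (cases I)
  have lh: "lo < hi" using assms(1) I by simp
  show ?thesis
  proof (cases "hi < c")
    case True
    then have "\<not> c < lo" "\<not> c < hi" using lh by auto
    then show ?thesis using True I by simp
  next
    case F1: False
    show ?thesis
    proof (cases "lo < c")
      case True
      then have "\<not> c < lo" by simp
      then show ?thesis using True F1 I lh assms(2)
        by (cases "c < hi") (auto simp: algebra_simps)
    next
      case False
      then show ?thesis using F1 I lh assms(2)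
        by (cases "c < lo") (auto simp: algebra_simps)
    qed
  qed
qed

lemma lpc_mem: assumes "x \<in> ivl_set I" "x \<in> hl c cl" "0 < f" shows "x \<in> ivl_set (lpc c cl f I)"
proof -
  obtain lo hi lc rc where I: "I = (lo, hi, lc, rc)" by (cases I)
  have xb: "lo \<le> x" "x \<le> hi" using assms(1) I ivl_set_bounds by blast+
  show ?thesis
  proof (cases "hi < c")
    case True then show ?thesis using assms(1) I by simp
  next
    case F1: False
    show ?thesis
    proof (cases "lo < c")
      case True then show ?thesis using F1 assms(1,2) I by (auto simp: hl_def split: if_splits)
    next
      case False
      then have "x = c" using assms(2) xb by (auto simp: hl_def)
      then show ?thesis using F1 False I assms(3) by simp
    qed
  qed
qed

lemma rpc_mem: assumes "x \<in> ivl_set I" "x \<notin> hl c cl" "0 < f" shows "x \<in> ivl_set (rpc c cl f I)"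
proof -
  obtain lo hi lc rc where I: "I = (lo, hi, lc, rc)" by (cases I)
  have xb: "lo \<le> x" "x \<le> hi" using assms(1) I ivl_set_bounds by blast+
  have xc: "c \<le> x" "x = c \<Longrightarrow> \<not> cl" using assms(2) by (auto simp: hl_def)
  have xc3: "c < x \<or> (x = c \<and> \<not> cl)" using assms(2) by (auto simp: hl_def)
  show ?thesis
  proof (cases "c < lo")
    case True then show ?thesis using assms(1) I by simp
  next
    case F1: False
    show ?thesis
    proof (cases "c < hi")
      case True then show ?thesis using F1 assms(1) I xc3 by (auto split: if_splits)
    next
      case False
      then have "x = c" using xc xb by auto
      then show ?thesis using F1 False I assms(3) by simp
    qed
  qed
qed

lemma le_of_sum: assumes "a + b \<le> c" "0 \<le> b" shows "a \<le> (c::levi_civita)"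
proof -
  have "a + 0 \<le> a + b" using assms(2) by (rule add_left_mono)
  then have "a \<le> a + b" by simp
  then show ?thesis using assms(1) by (rule order_trans)
qed

lemma CovProp_hl: "CovProp (hl c cl)"
  unfolding CovProp_def
proof (intro allI impI)
  fix S :: "nat \<Rightarrow> lc_ivl" and e :: levi_civita assume vS: "valid S" and e: "0 < e"
  obtain Q where Q: "lc_suminf (fl Q) < e" using fl_lt[OF e] by blast
  define S1 where "S1 n = lpc c cl (fl Q n) (S n)" for n
  define S2 where "S2 n = rpc c cl (fl Q n) (S n)" for n
  have iv: "is_ivl (S n)" for n using vS by (simp add: valid_def)
  have iv1: "is_ivl (S1 n)" for n unfolding S1_def using lpc_ivl[OF iv fl_pos] .
  have iv2: "is_ivl (S2 n)" for n unfolding S2_def using rpc_ivl[OF iv fl_pos] .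
  have sumle: "len S1 n + len S2 n \<le> len S n + fl Q n" for n
    unfolding len_def S1_def S2_def using lrpc_len[OF iv fl_pos] .
  have ge1: "0 \<le> len S1 n" for n using iv1 by (simp add: len_def ivl_len_nonneg)
  have ge2: "0 \<le> len S2 n" for n using iv2 by (simp add: len_def ivl_len_nonneg)
  have sa: "lc_summable (\<lambda>n. len S n + fl Q n)" "lc_suminf (\<lambda>n. len S n + fl Q n) = ssum S + lc_suminf (fl Q)"
    using summable_add[of "len S" "fl Q"] vS fl_summable by (auto simp: valid_def ssum_def)
  have le1: "len S1 n \<le> len S n + fl Q n" for n using le_of_sum[OF sumle[of n] ge2[of n]] .
  have le2: "len S2 n \<le> len S n + fl Q n" for n using le_of_sum[OF _ ge1[of n]] sumle[of n] by (simp add: add.commute)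
  have su1: "lc_summable (len S1)" using summable_dom(1)[OF ge1 le1 sa(1)] .
  have su2: "lc_summable (len S2)" using summable_dom(1)[OF ge2 le2 sa(1)] .
  have v1: "valid S1" using su1 iv1 by (simp add: valid_def)
  have v2: "valid S2" using su2 iv2 by (simp add: valid_def)
  have ss: "ssum S1 + ssum S2 = lc_suminf (\<lambda>n. len S1 n + len S2 n)" "lc_summable (\<lambda>n. len S1 n + len S2 n)"
    using summable_add[OF su1 su2] by (auto simp: ssum_def)
  have "lc_suminf (\<lambda>n. len S1 n + len S2 n) \<le> lc_suminf (\<lambda>n. len S n + fl Q n)"
    using summable_dom(2)[of "\<lambda>n. len S1 n + len S2 n", OF _ sumle sa(1)] ge1 ge2 by (simp add: add_nonneg_nonneg)
  then have "ssum S1 + ssum S2 \<le> ssum S + lc_suminf (fl Q)" using ss(1) sa(2) by simp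
  moreover have "ssum S + lc_suminf (fl Q) \<le> ssum S + e" using Q by simp
  ultimately have "ssum S1 + ssum S2 \<le> ssum S + e" by (rule order_trans)
  moreover have "hl c cl \<inter> U S \<subseteq> U S1"
  proof
    fix x assume "x \<in> hl c cl \<inter> U S"
    then obtain n where "x \<in> ivl_set (S n)" "x \<in> hl c cl" by (auto simp: U_def)
    then have "x \<in> ivl_set (S1 n)" unfolding S1_def by (rule lpc_mem[OF _ _ fl_pos])
    then show "x \<in> U S1" by (auto simp: U_def)
  qed
  moreover have "- hl c cl \<inter> U S \<subseteq> U S2"
  proof
    fix x assume "x \<in> - hl c cl \<inter> U S"
    then obtain n where "x \<in> ivl_set (S n)" "x \<notin> hl c cl" by (auto simp: U_def)
    then have "x \<in> ivl_set (S2 n)" unfolding S2_def by (rule rpc_mem[OF _ _ fl_pos])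
    then show "x \<in> U S2" by (auto simp: U_def)
  qed
  ultimately show "\<exists>S1 S2. valid S1 \<and> valid S2 \<and> hl c cl \<inter> U S \<subseteq> U S1 \<and> - hl c cl \<inter> U S \<subseteq> U S2 \<and>
      ssum S1 + ssum S2 \<le> ssum S + e" using v1 v2 by blast
qed

lemma ivl_set_hl: "ivl_set (a, b, lc, rc) = - hl a (\<not> lc) \<inter> hl b rc"
  by (auto simp: hl_def)

lemma CovProp_ivl: "CovProp (ivl_set I)"
proof -
  obtain a b lc rc where I: "I = (a, b, lc, rc)" by (cases I)
  show ?thesis unfolding I ivl_set_hl by (intro CovProp_inter CovProp_compl CovProp_hl)
qed

lemma Lprop_CovProp: "CovProp E \<Longrightarrow> Lprop E"
  using Cprop_Lprop CovProp_Cprop by blast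



lemma mon_diff: "mon r t - mon r' t = mon (r - r') t"
  by (rule lc_eqI) simp

lemma small_cover:
  fixes P :: "nat \<Rightarrow> levi_civita set"
  assumes ac: "a < c" and cov: "{x. a < x \<and> x < c} \<subseteq> (\<Union>n. P n)"
    and sP: "\<forall>n. \<forall>x\<in>P n. \<forall>y\<in>P n. sm s (x - y)"
  shows "sm s (c - a)"
proof (rule ccontr)
  assume ns: "\<not> sm s (c - a)"
  have pos: "0 < c - a" using ac by simp
  obtain t where t: "lc_rep (c - a) t > 0" "\<forall>p<t. lc_rep (c - a) p = 0" using pos_lead[OF pos] by blast
  obtain p where p: "p \<le> s" "lc_rep (c - a) p \<noteq> 0" using ns by (auto simp: sm_def)
  have ts: "t \<le> s" using t(2) p by (meson not_less order_trans)
  define g where "g = lc_rep (c - a) t"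
  have g: "0 < g" using t(1) by (simp add: g_def)
  define x where "x r = a + mon r t" for r
  have xin: "x r \<in> {x. a < x \<and> x < c}" if r: "r \<in> {0<..<g}" for r
  proof -
    have "0 < mon r t" using r by (simp add: mon_pos)
    then have "a < x r" by (simp add: x_def)
    moreover have "lc_pos (c - x r)" unfolding lc_pos_def
    proof (intro exI[of _ t] conjI allI impI)
      show "0 < lc_rep (c - x r) t" using r by (simp add: x_def g_def algebra_simps)
    next
      fix q assume "q < t"
      then have "lc_rep (c - a) q = 0" using t(2) by blast
      then show "lc_rep (c - x r) q = 0" using \<open>q < t\<close> by (simp add: x_def algebra_simps)
    qed
    then have "x r < c" by (simp add: lt_iff)
    ultimately show ?thesis by simp
  qed
  have "\<forall>r\<in>{0<..<g}. \<exists>n. x r \<in> P n" using xin cov by blast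
  then obtain nn where nn: "\<And>r. r \<in> {0<..<g} \<Longrightarrow> x r \<in> P (nn r)" by metis
  have "inj_on nn {0<..<g}"
  proof (rule inj_onI)
    fix r r' assume r: "r \<in> {0<..<g}" and r': "r' \<in> {0<..<g}" and e: "nn r = nn r'"
    have "x r \<in> P (nn r)" "x r' \<in> P (nn r)" using nn[OF r] nn[OF r'] e by simp_all
    then have "sm s (x r - x r')" using sP by blast
    moreover have "x r - x r' = mon (r - r') t" by (simp add: x_def mon_diff[symmetric])
    ultimately have "sm s (mon (r - r') t)" by simp
    then have "lc_rep (mon (r - r') t) t = 0" using ts unfolding sm_def by blast
    then show "r = r'" by simp
  qed
  then have "countable {0<..<g}" by (rule countableI)
  then show False using uncountable_open_interval g by blast
qed

definition lo :: "lc_ivl \<Rightarrow> levi_civita" where "lo I = fst I"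
definition hi :: "lc_ivl \<Rightarrow> levi_civita" where "hi I = fst (snd I)"

lemma ivl_len_lohi: "ivl_len I = hi I - lo I" by (cases I) (simp add: lo_def hi_def)
lemma is_ivl_lohi: "is_ivl I \<longleftrightarrow> lo I < hi I" by (cases I) (simp add: lo_def hi_def)
lemma ivl_set_lohi: "x \<in> ivl_set I \<Longrightarrow> lo I \<le> x \<and> x \<le> hi I"
  by (cases I) (auto simp: lo_def hi_def split: if_splits)

lemma big_cover:
  fixes P :: "nat \<Rightarrow> levi_civita set" and S :: "nat \<Rightarrow> lc_ivl"
  assumes sP: "\<forall>n. \<forall>x\<in>P n. \<forall>y\<in>P n. sm s (x - y)" and iv: "\<forall>i. is_ivl (S i)"
  shows "finite M \<Longrightarrow> {x. a < x \<and> x < b} \<subseteq> (\<Union>i\<in>M. ivl_set (S i)) \<union> (\<Union>n. P n) \<Longrightarrow>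
    \<exists>\<eta>. sm s \<eta> \<and> b - a \<le> sum (len S) M + \<eta>"
proof (induction M arbitrary: a rule: finite_psubset_induct)
  case (psubset M)
  have sum_nn: "0 \<le> sum (len S) N" for N
    using iv by (intro sum_nonneg) (simp add: len_def ivl_len_nonneg)
  show ?case
  proof (cases "a < b")
    case False
    then have "b - a \<le> 0" by simp
    then have "b - a \<le> sum (len S) M" using sum_nn[of M] by (rule order_trans)
    then have "b - a \<le> sum (len S) M + 0" by simp
    then show ?thesis using sm_zero by blast
  next
    case ab: True
    define K where "K = {i \<in> M. lo (S i) < b \<and> a < hi (S i)}"
    have finK: "finite K" using psubset.hyps(1) by (simp add: K_def)
    show ?thesis
    proof (cases "K = {}")
      case True
      have "{x. a < x \<and> x < b} \<subseteq> (\<Union>n. P n)"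
      proof
        fix x assume x: "x \<in> {x. a < x \<and> x < b}"
        have "x \<notin> ivl_set (S i)" if "i \<in> M" for i
        proof
          assume "x \<in> ivl_set (S i)"
          then have "lo (S i) \<le> x" "x \<le> hi (S i)" using ivl_set_lohi by blast+
          then have "i \<in> K" using x that by (auto simp: K_def)
          then show False using True by simp
        qed
        then show "x \<in> (\<Union>n. P n)" using psubset.prems x by blast
      qed
      then have "sm s (b - a)" using small_cover[OF ab _ sP] by blast
      moreover have "b - a \<le> sum (len S) M + (b - a)" using sum_nn[of M] by simp
      ultimately show ?thesis by blast
    next
      case Kne: False
      define c where "c = Min ((\<lambda>i. max (lo (S i)) a) ` K)"
      have "c \<in> (\<lambda>i. max (lo (S i)) a) ` K" unfolding c_def using finK Kne by (intro Min_in) auto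
      then obtain i where iK: "i \<in> K" and ci: "c = max (lo (S i)) a" by blast
      have cmin: "c \<le> max (lo (S j)) a" if "j \<in> K" for j
        unfolding c_def using finK that by (intro Min_le) auto
      have iM: "i \<in> M" and lob: "lo (S i) < b" and ahi: "a < hi (S i)" using iK by (auto simp: K_def)
      have ca: "a \<le> c" using ci by simp
      have cb: "c < b" using ci lob ab by simp
      have smc: "sm s (c - a)"
      proof (cases "a < c")
        case True
        have "{x. a < x \<and> x < c} \<subseteq> (\<Union>n. P n)"
        proof
          fix x assume x: "x \<in> {x. a < x \<and> x < c}"
          then have xab: "x \<in> {x. a < x \<and> x < b}" using cb by auto
          have "x \<notin> ivl_set (S j)" if "j \<in> M" for j
          proof
            assume "x \<in> ivl_set (S j)"
            then have "lo (S j) \<le> x" "x \<le> hi (S j)" using ivl_set_lohi by blast+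
            then have "j \<in> K" using xab that by (auto simp: K_def)
            then have "c \<le> max (lo (S j)) a" by (rule cmin)
            moreover have "max (lo (S j)) a \<le> x" using x \<open>lo (S j) \<le> x\<close> by (simp add: less_imp_le)
            ultimately have "c \<le> x" by (rule order_trans)
            then show False using x leD by blast
          qed
          then show "x \<in> (\<Union>n. P n)" using psubset.prems xab by blast
        qed
        then show ?thesis using small_cover[OF True _ sP] by blast
      next
        case False
        then have "c = a" using ca by simp
        then show ?thesis by simp
      qed
      have sub: "M - {i} \<subset> M" using iM by blast
      have "{x. hi (S i) < x \<and> x < b} \<subseteq> (\<Union>j\<in>M - {i}. ivl_set (S j)) \<union> (\<Union>n. P n)"
      proof
        fix x assume x: "x \<in> {x. hi (S i) < x \<and> x < b}"
        then have "a < x" using ahi less_trans by blast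
        then have "x \<in> {x. a < x \<and> x < b}" using x by simp
        moreover have "x \<notin> ivl_set (S i)"
        proof
          assume "x \<in> ivl_set (S i)"
          then have "x \<le> hi (S i)" using ivl_set_lohi by blast
          then show False using x leD by blast
        qed
        ultimately show "x \<in> (\<Union>j\<in>M - {i}. ivl_set (S j)) \<union> (\<Union>n. P n)" using psubset.prems by blast
      qed
      then obtain \<eta> where eta: "sm s \<eta>" "b - hi (S i) \<le> sum (len S) (M - {i}) + \<eta>"
        using psubset.IH[OF sub] by blast
      have sumM: "sum (len S) M = len S i + sum (len S) (M - {i})"
        using psubset.hyps(1) iM by (simp add: sum.remove)
      have lenI: "len S i = hi (S i) - lo (S i)" by (simp add: len_def ivl_len_lohi)
      have loc: "lo (S i) - a \<le> c - a" using ci by simp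
      have "b - a = (b - hi (S i)) + (hi (S i) - lo (S i)) + (lo (S i) - a)" by (simp add: algebra_simps)
      also have "\<dots> \<le> (sum (len S) (M - {i}) + \<eta>) + len S i + (c - a)"
        using eta(2) loc lenI by (intro add_mono) simp_all
      also have "\<dots> = sum (len S) M + (\<eta> + (c - a))" using sumM by (simp add: algebra_simps)
      finally show ?thesis using sm_add[OF eta(1) smc] by blast
    qed
  qed
qed


lemma cover_ge_len: assumes I: "is_ivl I" and S: "is_cover S (ivl_set I)" shows "ivl_len I \<le> ssum S"
proof (rule ccontr)
  assume "\<not> ivl_len I \<le> ssum S"
  then have d: "0 < ivl_len I - ssum S" by simp
  obtain s where s: "\<not> sm s (ivl_len I - ssum S)" using pos_not_sm[OF d] by blast
  have vS: "valid S" using S by (simp add: is_cover_iff)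
  then have su: "lc_summable (len S)" and iv: "\<forall>i. is_ivl (S i)" by (auto simp: valid_def)
  obtain N where N: "\<forall>n\<ge>N. sm s (len S n)" using summable_terms0[OF su] by blast
  define P where "P n = (if N \<le> n then ivl_set (S n) else {})" for n
  have sP: "\<forall>n. \<forall>x\<in>P n. \<forall>y\<in>P n. sm s (x - y)"
  proof (intro allI ballI)
    fix n x y assume x: "x \<in> P n" and y: "y \<in> P n"
    then have nN: "N \<le> n" and xy: "x \<in> ivl_set (S n)" "y \<in> ivl_set (S n)" by (auto simp: P_def split: if_splits)
    have b: "lo (S n) \<le> x" "x \<le> hi (S n)" "lo (S n) \<le> y" "y \<le> hi (S n)" using xy ivl_set_lohi by blast+
    have l: "len S n = hi (S n) - lo (S n)" by (simp add: len_def ivl_len_lohi)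
    have "x - y \<le> len S n" using diff_mono[OF b(2) b(3)] l by simp
    moreover have "y - x \<le> len S n" using diff_mono[OF b(4) b(1)] l by simp
    then have "- len S n \<le> x - y" by (simp add: minus_le_iff)
    ultimately show "sm s (x - y)" using sm_between N nN by blast
  qed
  obtain a b lc rc where Ie: "I = (a, b, lc, rc)" by (cases I)
  have "{x. a < x \<and> x < b} \<subseteq> (\<Union>i\<in>{..<N}. ivl_set (S i)) \<union> (\<Union>n. P n)"
  proof
    fix x assume "x \<in> {x. a < x \<and> x < b}"
    then have "x \<in> ivl_set I" by (auto simp: Ie less_imp_le)
    then have "x \<in> U S" using S by (auto simp: is_cover_iff)
    then obtain n where "x \<in> ivl_set (S n)" by (auto simp: U_def)
    then show "x \<in> (\<Union>i\<in>{..<N}. ivl_set (S i)) \<union> (\<Union>n. P n)"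
      by (cases "N \<le> n") (auto simp: P_def)
  qed
  then obtain \<eta> where eta: "sm s \<eta>" "b - a \<le> sum (len S) {..<N} + \<eta>"
    using big_cover[OF sP iv] by blast
  have "sum (len S) {..<N} \<le> ssum S"
    unfolding ssum_def by (rule sum_le_suminf) (simp_all add: su len_nonneg[OF vS])
  then have "ivl_len I \<le> ssum S + \<eta>" using eta(2) Ie by (simp add: add_right_mono order_trans)
  then have "ivl_len I - ssum S \<le> \<eta>" by (simp add: algebra_simps)
  moreover have "\<eta> < ivl_len I - ssum S" by (rule sm_less[OF eta(1) d s])
  ultimately show False by simp
qed

lemma sums_single: "lc_sums (\<lambda>n. if n = 0 then x else 0) x"
proof -
  have p: "lc_psum (\<lambda>n. if n = 0 then x else 0) (Suc n) = x" for n by (induction n) simp_all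
  show ?thesis unfolding lc_sums_def tendsto_sm
  proof
    fix Q
    have "\<forall>n\<ge>1. sm Q (lc_psum (\<lambda>n. if n = 0 then x else 0) n - x)"
    proof (intro allI impI)
      fix n :: nat assume "1 \<le> n"
      then obtain m where "n = Suc m" by (cases n) auto
      then show "sm Q (lc_psum (\<lambda>n. if n = 0 then x else 0) n - x)" using p by simp
    qed
    then show "\<exists>N. \<forall>n\<ge>N. sm Q (lc_psum (\<lambda>n. if n = 0 then x else 0) n - x)" by blast
  qed
qed

lemma cover_single: assumes "is_ivl I" "0 < e" shows "\<exists>T. is_cover T (ivl_set I) \<and> ssum T < ivl_len I + e"
proof -
  define F where "F n = (if n = 0 then Some I else None)" for n :: nat
  have dF: "disj_fam F" using assms(1) by (auto simp: disj_fam_def F_def fam_piece_def)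
  have fl: "fam_len F = (\<lambda>n. if n = 0 then ivl_len I else 0)" by (rule ext) (simp add: F_def fam_len_def)
  have sF: "lc_sums (fam_len F) (ivl_len I)" unfolding fl by (rule sums_single)
  obtain Q where Q: "lc_suminf (fl Q) < e" using fl_lt[OF assms(2)] by blast
  have c: "valid (famc F Q)" "(\<Union>n. fam_piece F n) \<subseteq> U (famc F Q)"
      "ssum (famc F Q) \<le> lc_suminf (fam_len F) + lc_suminf (fl Q)"
    using famc[OF dF sums_summable[OF sF]] by blast+
  have "ivl_set I \<subseteq> (\<Union>n. fam_piece F n)" by (auto simp: fam_piece_def F_def intro: exI[of _ 0])
  then have "is_cover (famc F Q) (ivl_set I)" using c by (auto simp: is_cover_iff)
  moreover have "ssum (famc F Q) < ivl_len I + e"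
  proof -
    have "ssum (famc F Q) \<le> ivl_len I + lc_suminf (fl Q)" using c(3) sums_unique[OF sF] by simp
    also have "\<dots> < ivl_len I + e" using Q by simp
    finally show ?thesis .
  qed
  ultimately show ?thesis by blast
qed

lemma Mu_ivl: assumes "is_ivl I" shows "outer_measurable (ivl_set I)" "Mu (ivl_set I) = ivl_len I"
proof -
  have "is_inf (cover_sums (ivl_set I)) (ivl_len I)" unfolding is_inf_def
  proof (intro conjI ballI allI impI)
    fix t assume "t \<in> cover_sums (ivl_set I)"
    then show "ivl_len I \<le> t" using cover_ge_len[OF assms] by (auto simp: cover_sums_iff)
  next
    fix m' assume m': "\<forall>t\<in>cover_sums (ivl_set I). m' \<le> t"
    show "m' \<le> ivl_len I"
    proof (rule ccontr)
      assume "\<not> m' \<le> ivl_len I"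
      then have "0 < m' - ivl_len I" by simp
      then obtain T where T: "is_cover T (ivl_set I)" "ssum T < ivl_len I + (m' - ivl_len I)"
        using cover_single[OF assms] by blast
      have "ssum T \<in> cover_sums (ivl_set I)" using T(1) cover_sums_iff by blast
      then have "m' \<le> ssum T" using m' by blast
      then show False using T(2) leD by simp
    qed
  qed
  then show "outer_measurable (ivl_set I)" "Mu (ivl_set I) = ivl_len I" using Mu_eqI by blast+
qed

lemma Mu_empty: "outer_measurable {}" "Mu {} = 0"
proof -
  have "is_inf (cover_sums {}) 0" unfolding is_inf_def
  proof (intro conjI ballI allI impI)
    fix t assume "t \<in> cover_sums {}"
    then show "0 \<le> t" using ssum_nonneg by (auto simp: cover_sums_iff is_cover_iff)
  next
    fix m' assume m': "\<forall>t\<in>cover_sums {}. m' \<le> t"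
    show "m' \<le> 0"
    proof (rule ccontr)
      assume "\<not> m' \<le> 0"
      then have "0 < m'" by simp
      then obtain Q where Q: "valid (fc Q 0)" "ssum (fc Q 0) < m'" using small_filler by blast
      then have "ssum (fc Q 0) \<in> cover_sums {}" by (auto simp: cover_sums_iff is_cover_iff)
      then show False using m' Q(2) leD by blast
    qed
  qed
  then show "outer_measurable {}" "Mu {} = 0" using Mu_eqI by blast+
qed



definition trunc :: "lc_fam \<Rightarrow> nat \<Rightarrow> lc_fam" where
  "trunc F K n = (if n < K then F n else None)"
definition tailf :: "lc_fam \<Rightarrow> nat \<Rightarrow> lc_fam" where
  "tailf F K n = (if K \<le> n then F n else None)"
definition Fin :: "lc_fam \<Rightarrow> nat \<Rightarrow> levi_civita set" where
  "Fin F K = (\<Union>n\<in>{..<K}. fam_piece F n)"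

lemma piece_trunc: "fam_piece (trunc F K) n = (if n < K then fam_piece F n else {})"
  by (simp add: fam_piece_def trunc_def)
lemma piece_tail: "fam_piece (tailf F K) n = (if K \<le> n then fam_piece F n else {})"
  by (simp add: fam_piece_def tailf_def)
lemma len_trunc: "fam_len (trunc F K) n = (if n < K then fam_len F n else 0)"
  by (simp add: fam_len_def trunc_def)
lemma len_tail: "fam_len (tailf F K) n = (if K \<le> n then fam_len F n else 0)"
  by (simp add: fam_len_def tailf_def)

lemma disj_trunc: assumes "disj_fam F" shows "disj_fam (trunc F K)"
  unfolding disj_fam_def
proof (intro conjI allI impI)
  fix n I assume "trunc F K n = Some I"
  then show "is_ivl I" using disj_fam_ivl[OF assms] by (simp add: trunc_def split: if_splits)
next
  fix m n :: nat assume "m \<noteq> n"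
  then show "fam_piece (trunc F K) m \<inter> fam_piece (trunc F K) n = {}"
    using assms unfolding disj_fam_def piece_trunc by auto
qed

lemma disj_tail: assumes "disj_fam F" shows "disj_fam (tailf F K)"
  unfolding disj_fam_def
proof (intro conjI allI impI)
  fix n I assume "tailf F K n = Some I"
  then show "is_ivl I" using disj_fam_ivl[OF assms] by (simp add: tailf_def split: if_splits)
next
  fix m n :: nat assume "m \<noteq> n"
  then show "fam_piece (tailf F K) m \<inter> fam_piece (tailf F K) n = {}"
    using assms unfolding disj_fam_def piece_tail by auto
qed

lemma sum_if_less: fixes n K :: nat shows "sum (\<lambda>k. if k < K then f k else 0) {..<n} = sum f {..<min n K}"
proof (induction n)
  case 0 then show ?case by simp
next
  case (Suc n)
  show ?case
  proof (cases "n < K")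
    case True
    then have "min (Suc n) K = Suc (min n K)" by simp
    then show ?thesis using Suc True by simp
  next
    case False
    then have "min (Suc n) K = min n K" by simp
    then show ?thesis using Suc False by simp
  qed
qed

lemma sums_trunc: "lc_sums (fam_len (trunc F K)) (sum (fam_len F) {..<K})"
  unfolding lc_sums_def tendsto_sm
proof
  fix Q
  have "\<forall>n\<ge>K. sm Q (lc_psum (fam_len (trunc F K)) n - sum (fam_len F) {..<K})"
  proof (intro allI impI)
    fix n assume "K \<le> n"
    then have "min n K = K" by simp
    then have "lc_psum (fam_len (trunc F K)) n = sum (fam_len F) {..<K}"
      unfolding psum_sum len_trunc[abs_def] sum_if_less by simp
    then show "sm Q (lc_psum (fam_len (trunc F K)) n - sum (fam_len F) {..<K})" by simp
  qed
  then show "\<exists>N. \<forall>n\<ge>N. sm Q (lc_psum (fam_len (trunc F K)) n - sum (fam_len F) {..<K})" by blast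
qed

lemma psum_diff: "lc_psum (\<lambda>n. f n - g n) n = lc_psum f n - lc_psum g n"
  by (induction n) (simp_all add: algebra_simps)

lemma sums_diff: "lc_sums f a \<Longrightarrow> lc_sums g b \<Longrightarrow> lc_sums (\<lambda>n. f n - g n) (a - b)"
  unfolding lc_sums_def psum_diff by (rule tendsto_diff)

lemma sums_tail: assumes "lc_summable (fam_len F)"
  shows "lc_sums (fam_len (tailf F K)) (lc_suminf (fam_len F) - sum (fam_len F) {..<K})"
proof -
  have e: "fam_len (tailf F K) = (\<lambda>n. fam_len F n - fam_len (trunc F K) n)"
    by (rule ext) (simp add: len_tail len_trunc)
  show ?thesis unfolding e by (rule sums_diff[OF summable_sums[OF assms] sums_trunc])
qed

lemma tail_small: assumes "lc_summable (fam_len F)" "0 < e"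
  shows "\<exists>N. \<forall>K\<ge>N. lc_suminf (fam_len F) - sum (fam_len F) {..<K} < e"
proof -
  obtain Q where Q: "\<not> sm Q e" using pos_not_sm[OF assms(2)] by blast
  obtain N where N: "\<forall>n\<ge>N. sm Q (lc_psum (fam_len F) n - lc_suminf (fam_len F))"
    using summable_sums[OF assms(1)] by (auto simp: lc_sums_def tendsto_sm)
  have "\<forall>K\<ge>N. lc_suminf (fam_len F) - sum (fam_len F) {..<K} < e"
  proof (intro allI impI)
    fix K assume "N \<le> K"
    then have "sm Q (lc_psum (fam_len F) K - lc_suminf (fam_len F))" using N by blast
    then have "sm Q (lc_suminf (fam_len F) - sum (fam_len F) {..<K})"
      by (simp add: psum_sum sm_diff_commute)
    then show "lc_suminf (fam_len F) - sum (fam_len F) {..<K} < e" using sm_less[OF _ assms(2) Q] by blast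
  qed
  then show ?thesis by blast
qed

lemma CovProp_piece: "CovProp (fam_piece F n)"
  by (cases "F n") (simp_all add: fam_piece_def CovProp_empty CovProp_ivl)

lemma Fin_Suc: "Fin F (Suc K) = Fin F K \<union> fam_piece F K"
  by (auto simp: Fin_def lessThan_Suc)

lemma CovProp_Fin: "CovProp (Fin F K)"
proof (induction K)
  case 0 then show ?case by (simp add: Fin_def CovProp_empty)
next
  case (Suc K) then show ?case unfolding Fin_Suc by (intro CovProp_union CovProp_piece)
qed

lemma Fin_bounded: assumes "disj_fam F" shows "\<exists>J. is_ivl J \<and> Fin F K \<subseteq> ivl_set J"
proof (induction K)
  case 0
  have "is_ivl (0, mon 1 0, True, True)" using mon_pos[of 1 0] by simp
  then show ?case by (intro exI[of _ "(0, mon 1 0, True, True)"]) (simp add: Fin_def)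
next
  case (Suc K)
  then obtain J where J: "is_ivl J" "Fin F K \<subseteq> ivl_set J" by blast
  show ?case
  proof (cases "F K")
    case None
    then have "Fin F (Suc K) = Fin F K" by (simp add: Fin_Suc fam_piece_def)
    then show ?thesis using J by metis
  next
    case (Some I)
    have iI: "is_ivl I" using disj_fam_ivl[OF assms Some] .
    define J' where "J' = (min (lo J) (lo I), max (hi J) (hi I), True, True)"
    have "is_ivl J'" using J(1) iI unfolding J'_def is_ivl_lohi
      by (simp add: lo_def hi_def min_less_iff_disj less_max_iff_disj)
    moreover have "ivl_set J \<subseteq> ivl_set J'"
    proof
      fix x assume "x \<in> ivl_set J"
      then have "lo J \<le> x" "x \<le> hi J" using ivl_set_lohi by blast+
      then show "x \<in> ivl_set J'" by (simp add: J'_def min_le_iff_disj le_max_iff_disj)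
    qed
    moreover have "ivl_set I \<subseteq> ivl_set J'"
    proof
      fix x assume "x \<in> ivl_set I"
      then have "lo I \<le> x" "x \<le> hi I" using ivl_set_lohi by blast+
      then show "x \<in> ivl_set J'" by (simp add: J'_def min_le_iff_disj le_max_iff_disj)
    qed
    ultimately show ?thesis using J(2) Some by (intro exI[of _ J']) (auto simp: Fin_Suc fam_piece_def)
  qed
qed

lemma om_Fin: assumes "disj_fam F" shows "outer_measurable (Fin F K)"
proof -
  obtain J where J: "is_ivl J" "Fin F K \<subseteq> ivl_set J" using Fin_bounded[OF assms] by blast
  have "Lprop (Fin F K)" by (rule Lprop_CovProp[OF CovProp_Fin])
  then have "outer_measurable (Fin F K \<inter> ivl_set J)" using Mu_ivl(1)[OF J(1)] unfolding Lprop_def by blast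
  moreover have "Fin F K \<inter> ivl_set J = Fin F K" using J(2) by blast
  ultimately show ?thesis by simp
qed

lemma Mu_piece: assumes "disj_fam F" shows "Mu (fam_piece F n) = fam_len F n"
proof (cases "F n")
  case None then show ?thesis by (simp add: fam_piece_def fam_len_def Mu_empty)
next
  case (Some I)
  then show ?thesis using Mu_ivl(2)[OF disj_fam_ivl[OF assms Some]] by (simp add: fam_piece_def fam_len_def)
qed

lemma Mu_Fin: assumes "disj_fam F" shows "Mu (Fin F K) = sum (fam_len F) {..<K}"
proof (induction K)
  case 0 then show ?case by (simp add: Fin_def Mu_empty)
next
  case (Suc K)
  have om: "outer_measurable (Fin F (Suc K))" by (rule om_Fin[OF assms])
  have L: "Lprop (fam_piece F K)" by (rule Lprop_CovProp[OF CovProp_piece])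
  have e1: "fam_piece F K \<inter> Fin F (Suc K) = fam_piece F K" by (auto simp: Fin_Suc)
  have e2: "- fam_piece F K \<inter> Fin F (Suc K) = Fin F K"
  proof -
    have "fam_piece F n \<inter> fam_piece F K = {}" if "n < K" for n
      using assms that unfolding disj_fam_def by (metis less_irrefl)
    then have "Fin F K \<inter> fam_piece F K = {}" unfolding Fin_def by blast
    then show ?thesis unfolding Fin_Suc by blast
  qed
  have "Mu (Fin F (Suc K)) = Mu (fam_piece F K \<inter> Fin F (Suc K)) + Mu (- fam_piece F K \<inter> Fin F (Suc K))"
    using L om unfolding Lprop_def by blast
  then have "Mu (Fin F (Suc K)) = Mu (fam_piece F K) + Mu (Fin F K)" by (simp only: e1 e2)
  then show ?case using Suc Mu_piece[OF assms] by (simp add: add.commute)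
qed



definition sc :: "real \<Rightarrow> levi_civita \<Rightarrow> levi_civita" where
  "sc r x = Abs_lc (\<lambda>q. r * lc_rep x q)"

lemma lf_sc: "lf (\<lambda>q. r * lc_rep x q)"
proof -
  have "{p. p \<le> q \<and> r * lc_rep x p \<noteq> 0} \<subseteq> {p. p \<le> q \<and> lc_rep x p \<noteq> 0}" for q by auto
  then show ?thesis using lf_rep[of x] unfolding lf_def by (meson finite_subset)
qed

lemma rep_sc[simp]: "lc_rep (sc r x) q = r * lc_rep x q"
  by (simp add: sc_def lf_sc)

lemma sc_pos: "0 < r \<Longrightarrow> 0 < x \<Longrightarrow> 0 < sc r x"
  unfolding pos0_iff lc_pos_def by (auto intro: mult_pos_pos)

lemma lower_inner: assumes "inner_fam I A" "is_cover C A"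
  shows "lc_suminf (fam_len I) \<le> ssum C"
proof -
  have dI: "disj_fam I" and sI: "lc_summable (fam_len I)" and sub: "(\<Union>n. fam_piece I n) \<subseteq> A"
    using assms(1) by (auto simp: inner_fam_def)
  have "\<forall>K\<ge>0. lc_psum (fam_len I) K \<le> ssum C"
  proof (intro allI impI)
    fix K :: nat
    have "Fin I K \<subseteq> A" using sub by (auto simp: Fin_def)
    then have "is_cover C (Fin I K)" using assms(2) is_cover_mono by blast
    then have "Mu (Fin I K) \<le> ssum C" using Mu_le om_Fin[OF dI] by blast
    then show "lc_psum (fam_len I) K \<le> ssum C" using Mu_Fin[OF dI] by (simp add: psum_sum)
  qed
  then show ?thesis using tendsto_le_const summable_sums[OF sI] unfolding lc_sums_def by blast
qed

lemma outer_cover: assumes "outer_fam J A"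
  shows "is_cover (famc J Q) A" "ssum (famc J Q) \<le> lc_suminf (fam_len J) + lc_suminf (fl Q)"
proof -
  have dJ: "disj_fam J" and sJ: "lc_summable (fam_len J)" and sub: "A \<subseteq> (\<Union>n. fam_piece J n)"
    using assms by (auto simp: outer_fam_def)
  have "A \<subseteq> U (famc J Q)" using famc(2)[OF dJ sJ, of Q] sub by (rule subset_trans[rotated])
  then show "is_cover (famc J Q) A" using famc(1)[OF dJ sJ, of Q] by (simp add: is_cover_iff)
  show "ssum (famc J Q) \<le> lc_suminf (fam_len J) + lc_suminf (fl Q)" using famc[OF dJ sJ] by blast
qed

lemma Smeas_approx: assumes "S_measurable A" "0 < e"
  shows "\<exists>I J Q. inner_fam I A \<and> outer_fam J A \<and>
     lc_suminf (fam_len J) - lc_suminf (fam_len I) \<le> half e \<and> lc_suminf (fl Q) < half e"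
proof -
  obtain I J where IJ: "inner_fam I A" "outer_fam J A" "lc_suminf (fam_len J) - lc_suminf (fam_len I) \<le> half e"
    using assms(1) half_pos[OF assms(2)] unfolding S_measurable_def by blast
  obtain Q where "lc_suminf (fl Q) < half e" using fl_lt[OF half_pos[OF assms(2)]] by blast
  then show ?thesis using IJ by blast
qed

lemma approx_bound:
  assumes "sJ - sI \<le> h" "phi < h" "sI \<le> m" "w \<le> sJ + phi"
  shows "w \<le> m + (h + h :: levi_civita)"
proof -
  have "sJ \<le> sI + h" using assms(1) by (simp add: algebra_simps)
  then have "sJ + phi \<le> (sI + h) + h" using assms(2) by (intro add_mono) simp_all
  also have "\<dots> \<le> m + h + h" using assms(3) by simp
  finally show ?thesis using assms(4) by (simp add: add.assoc)
qed

lemma is_sup_unique: assumes "is_sup T m" "is_sup T m'" shows "m = m'"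
proof -
  have "m \<le> m'" "m' \<le> m" using assms unfolding is_sup_def by blast+
  then show ?thesis by simp
qed

lemma goal1: assumes "S_measurable A" shows "outer_measurable A" "Mu A = Ms A"
proof -
  have "\<exists>m. is_inf (cover_sums A) m"
  proof (rule width_inf)
    fix e :: levi_civita assume e: "0 < e"
    obtain I J Q where IJ: "inner_fam I A" "outer_fam J A"
      "lc_suminf (fam_len J) - lc_suminf (fam_len I) \<le> half e" "lc_suminf (fl Q) < half e"
      using Smeas_approx[OF assms e] by blast
    have x: "ssum (famc J Q) \<in> cover_sums A" using outer_cover(1)[OF IJ(2)] cover_sums_iff by blast
    have l: "\<forall>y\<in>cover_sums A. lc_suminf (fam_len I) \<le> y"
      using lower_inner[OF IJ(1)] by (auto simp: cover_sums_iff)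
    have "ssum (famc J Q) \<le> lc_suminf (fam_len I) + (half e + half e)"
      by (rule approx_bound[OF IJ(3) IJ(4) order_refl outer_cover(2)[OF IJ(2)]])
    then have "ssum (famc J Q) - lc_suminf (fam_len I) \<le> e" by (simp add: half_half algebra_simps)
    then show "\<exists>x\<in>cover_sums A. \<exists>l. (\<forall>y\<in>cover_sums A. l \<le> y) \<and> x - l \<le> e" using x l by blast
  qed
  then show om: "outer_measurable A" by (simp add: outer_measurable_def)
  have "is_sup {lc_suminf (fam_len I) | I. inner_fam I A} (Mu A)" unfolding is_sup_def
  proof (intro conjI ballI allI impI)
    fix t assume "t \<in> {lc_suminf (fam_len I) | I. inner_fam I A}"
    then obtain I where I: "inner_fam I A" "t = lc_suminf (fam_len I)" by blast
    show "t \<le> Mu A" unfolding I(2) by (rule Mu_ge[OF om lower_inner[OF I(1)]])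
  next
    fix m' assume m': "\<forall>t\<in>{lc_suminf (fam_len I) | I. inner_fam I A}. t \<le> m'"
    show "Mu A \<le> m'"
    proof (rule le_eps)
      fix e :: levi_civita assume e: "0 < e"
      obtain I J Q where IJ: "inner_fam I A" "outer_fam J A"
        "lc_suminf (fam_len J) - lc_suminf (fam_len I) \<le> half e" "lc_suminf (fl Q) < half e"
        using Smeas_approx[OF assms e] by blast
      have "lc_suminf (fam_len I) \<le> m'" using m' IJ(1) by blast
      have "Mu A \<le> ssum (famc J Q)" using Mu_le[OF om outer_cover(1)[OF IJ(2)]] .
      also have "\<dots> \<le> m' + (half e + half e)"
        by (rule approx_bound[OF IJ(3) IJ(4) \<open>lc_suminf (fam_len I) \<le> m'\<close> outer_cover(2)[OF IJ(2)]])
      finally show "Mu A \<le> m' + e" by (simp add: half_half)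
    qed
  qed
  then show "Mu A = Ms A" unfolding Ms_def using is_sup_unique by (metis (mono_tags, lifting) theI)
qed


lemma Fin_trunc: "(\<Union>n. fam_piece (trunc F K) n) = Fin F K"
  by (auto simp: Fin_def piece_trunc split: if_splits)

lemma split_pieces: "x \<in> (\<Union>n. fam_piece F n) \<Longrightarrow> x \<in> Fin F K \<or> x \<in> (\<Union>n. fam_piece (tailf F K) n)"
proof -
  assume "x \<in> (\<Union>n. fam_piece F n)"
  then obtain n where n: "x \<in> fam_piece F n" by blast
  show ?thesis
  proof (cases "n < K")
    case True then show ?thesis using n by (auto simp: Fin_def)
  next
    case False then have "x \<in> fam_piece (tailf F K) n" using n by (simp add: piece_tail)
    then show ?thesis by blast
  qed
qed

lemma nonneg_sum_le: assumes "(s + e) - t = X" "0 \<le> X" shows "t \<le> s + (e::levi_civita)"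
  using assms by (simp add: algebra_simps)

lemma goal2: assumes "S_measurable A" shows "CovProp A"
  unfolding CovProp_def
proof (intro allI impI)
  fix S :: "nat \<Rightarrow> lc_ivl" and e :: levi_civita assume vS: "valid S" and e: "0 < e"
  define d where "d = sc (1/16) e"
  have d: "0 < d" unfolding d_def by (rule sc_pos) (simp_all add: e)
  obtain I J where IJ: "inner_fam I A" "outer_fam J A" "lc_suminf (fam_len J) - lc_suminf (fam_len I) \<le> d"
    using assms d unfolding S_measurable_def by blast
  have dI: "disj_fam I" and sI: "lc_summable (fam_len I)" and subI: "(\<Union>n. fam_piece I n) \<subseteq> A"
    using IJ(1) by (auto simp: inner_fam_def)
  have dJ: "disj_fam J" and sJ: "lc_summable (fam_len J)" and subJ: "A \<subseteq> (\<Union>n. fam_piece J n)"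
    using IJ(2) by (auto simp: outer_fam_def)
  obtain K1 where K1: "\<forall>K\<ge>K1. lc_suminf (fam_len I) - sum (fam_len I) {..<K} < d" using tail_small[OF sI d] by blast
  obtain K2 where K2: "\<forall>K\<ge>K2. lc_suminf (fam_len J) - sum (fam_len J) {..<K} < d" using tail_small[OF sJ d] by blast
  define K where "K = max K1 K2"
  define SI where "SI = lc_suminf (fam_len I)"
  define SJ where "SJ = lc_suminf (fam_len J)"
  define PI where "PI = sum (fam_len I) {..<K}"
  define PJ where "PJ = sum (fam_len J) {..<K}"
  define tI where "tI = SI - PI"
  define tJ where "tJ = SJ - PJ"
  have tIs: "tI < d" using K1 by (simp add: tI_def SI_def PI_def K_def)
  have tJs: "tJ < d" using K2 by (simp add: tJ_def SJ_def PJ_def K_def)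
  have tJ0: "0 \<le> tJ"
  proof -
    have "lc_sums (fam_len (tailf J K)) tJ" using sums_tail[OF sJ, of K] by (simp add: tJ_def SJ_def PJ_def)
    then have "lc_suminf (fam_len (tailf J K)) = tJ" "lc_summable (fam_len (tailf J K))"
      using sums_unique sums_summable by blast+
    moreover have "0 \<le> lc_suminf (fam_len (tailf J K))"
      by (rule suminf_nonneg[OF fam_len_nonneg[OF disj_tail[OF dJ]]]) (use calculation in simp)
    ultimately show ?thesis by simp
  qed
  obtain Q where Q: "lc_suminf (fl Q) < d" using fl_lt[OF d] by blast
  define phi where "phi = lc_suminf (fl Q)"
  obtain C1 C2 where C: "valid C1" "valid C2" "Fin J K \<inter> U S \<subseteq> U C1" "- Fin J K \<inter> U S \<subseteq> U C2"
      "ssum C1 + ssum C2 \<le> ssum S + d" using CovPropD[OF CovProp_Fin vS d] by blast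
  define W where "W = famc (trunc J K) Q"
  have Wp: "valid W" "Fin J K \<subseteq> U W" "ssum W \<le> PJ + phi"
    using famc[OF disj_trunc[OF dJ, of K] sums_summable[OF sums_trunc], where Q=Q]
      sums_unique[OF sums_trunc[of J K]] unfolding W_def Fin_trunc PJ_def phi_def by auto
  obtain D1 D2 where D: "valid D1" "valid D2" "Fin I K \<inter> U W \<subseteq> U D1" "- Fin I K \<inter> U W \<subseteq> U D2"
      "ssum D1 + ssum D2 \<le> ssum W + d" using CovPropD[OF CovProp_Fin Wp(1) d] by blast
  define T where "T = famc (tailf J K) Q"
  have Tp: "valid T" "(\<Union>n. fam_piece (tailf J K) n) \<subseteq> U T" "ssum T \<le> tJ + phi"
    using famc[OF disj_tail[OF dJ, of K] sums_summable[OF sums_tail[OF sJ]], where Q=Q]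
      sums_unique[OF sums_tail[OF sJ, of K]] unfolding T_def tJ_def SJ_def PJ_def phi_def by auto
  have coverA: "x \<in> Fin J K \<or> x \<in> U T" if "x \<in> A" for x
    using split_pieces[of x J K] subJ that Tp(2) by blast
  have "Fin I K \<subseteq> U (ilv D1 T)"
  proof
    fix x assume x: "x \<in> Fin I K"
    then have "x \<in> A" using subI by (auto simp: Fin_def)
    then have "x \<in> Fin J K \<or> x \<in> U T" by (rule coverA)
    then have "x \<in> U D1 \<or> x \<in> U T" using x Wp(2) D(3) by blast
    then show "x \<in> U (ilv D1 T)" using ilv_cover(2)[OF D(1) Tp(1)] by blast
  qed
  then have "is_cover (ilv D1 T) (Fin I K)" using ilv_cover(1)[OF D(1) Tp(1)] by (simp add: is_cover_iff)
  then have h4: "PI \<le> ssum D1 + ssum T"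
    using Mu_le[OF om_Fin[OF dI]] Mu_Fin[OF dI] ilv_cover(3)[OF D(1) Tp(1)] unfolding PI_def by metis
  have o1: "A \<inter> U S \<subseteq> U (ilv C1 T)"
  proof
    fix x assume x: "x \<in> A \<inter> U S"
    then have "x \<in> Fin J K \<or> x \<in> U T" using coverA by blast
    then show "x \<in> U (ilv C1 T)" using x C(3) ilv_cover(2)[OF C(1) Tp(1)] by blast
  qed
  have o2: "- A \<inter> U S \<subseteq> U (ilv C2 D2)"
  proof
    fix x assume x: "x \<in> - A \<inter> U S"
    then have xF: "x \<notin> Fin I K" using subI by (auto simp: Fin_def)
    show "x \<in> U (ilv C2 D2)"
    proof (cases "x \<in> Fin J K")
      case True
      then have "x \<in> U W" using Wp(2) by blast
      then have "x \<in> U D2" using D(4) xF by blast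
      then show ?thesis using ilv_cover(2)[OF C(2) D(2)] by blast
    next
      case False
      then have "x \<in> U C2" using C(4) x by blast
      then show ?thesis using ilv_cover(2)[OF C(2) D(2)] by blast
    qed
  qed
  have tot: "ssum (ilv C1 T) + ssum (ilv C2 D2) = ssum C1 + ssum T + (ssum C2 + ssum D2)"
    using ilv_cover(3)[OF C(1) Tp(1)] ilv_cover(3)[OF C(2) D(2)] by simp
  have h6: "SJ - SI \<le> d" using IJ(3) by (simp add: SJ_def SI_def)
  define X where "X = (ssum S + d - (ssum C1 + ssum C2)) + (ssum W + d - (ssum D1 + ssum D2)) +
     (PJ + phi - ssum W) + (ssum D1 + ssum T - PI) + (tJ + phi - ssum T) + (tJ + phi - ssum T) +
     (d - (SJ - SI)) + tJ + (d - tI) + (d - tJ) + (d - tJ) + (d - phi) + (d - phi) + (d - phi) +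
     (d + d + d + d + d + d + d)"
  have X0: "0 \<le> X" unfolding X_def
    using C(5) D(5) Wp(3) h4 Tp(3) h6 tJ0 tIs tJs Q d
    by (intro add_nonneg_nonneg) (simp_all add: algebra_simps phi_def less_imp_le)
  have XE: "(ssum S + e) - (ssum C1 + ssum T + (ssum C2 + ssum D2)) = X"
    unfolding X_def tI_def tJ_def d_def by (rule lc_eqI) (simp add: algebra_simps)
  have "ssum (ilv C1 T) + ssum (ilv C2 D2) \<le> ssum S + e"
    unfolding tot by (rule nonneg_sum_le[OF XE X0])
  then show "\<exists>S1 S2. valid S1 \<and> valid S2 \<and> A \<inter> U S \<subseteq> U S1 \<and> - A \<inter> U S \<subseteq> U S2 \<and>
      ssum S1 + ssum S2 \<le> ssum S + e"
    using o1 o2 ilv_cover(1)[OF C(1) Tp(1)] ilv_cover(1)[OF C(2) D(2)] by blast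
qed


theorem mainTheorem16:
  fixes A :: "levi_civita set"
  assumes "S_measurable A"
  shows "L_measurable A \<and> L_measure A = Ms A"
proof -
  have "Lprop A" by (rule Lprop_CovProp[OF goal2[OF assms]])
  then show ?thesis using goal1[OF assms] unfolding L_measurable_def L_measure_def Lprop_def by blast
qed


end
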